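(* Let $q$ be a prime power and $n',k',n,k\in\mathbb{N}$. Let $(Q'^{(h)}=\mathrm{CSS}(Q'^{(h)}_X,Q'^{(h)}_Z;\mathrm{Enc}'^{(h)}_Z:\mathbb{F}_{q^{k'}}\to\mathbb{F}_q^{n'}/Q'^{(h)\perp}_X))_{h\in[4]}$ be a $4$-multiplication-friendly collection of CSS codes over $\mathbb{F}_q$, where $Q'^{(h)}$ has parameters $[[n',k',d'^{(h)}]]_q$, and let $(Q^{(h)}=\mathrm{CSS}(Q^{(h)}_X,Q^{(h)}_Z;\mathrm{Enc}^{(h)}_Z))_{h\in[3]}$ be a triple of CSS codes over $\mathbb{F}_{q^{k'}}$, with $Q^{(h)}$ having parameters $[[n,k,d^{(h)}]]_{q^{k'}}$, that supports a transversal $CCZ_{q^{k'}}$ gate. Fix $r\in\mathbb{N}$ with $3(r-1)<k'$ and $r\leq q$, a subset $A\subseteq\mathbb{F}_q$ with $|A|=r$, and an irreducible polynomial $\gamma(X)\in\mathbb{F}_q[X]$ of degree $k'$, so that $\mathbb{F}_{q^{k'}}=\mathbb{F}_q[X]/(\gamma(X))\cong\mathbb{F}_q[X]^{<k'}$. For $h\in[4]$ let $\mathrm{Enc}'^{(h)}_X$ be any $X$ encoding function compatible with $\mathrm{Enc}'^{(h)}_Z$ with respect to the trace form $(x,z)\mapsto\mathrm{tr}_{\mathbb{F}_{q^{k'}}/\mathbb{F}_q}(xz)$, and for $h\in[3]$ let $\mathrm{Enc}^{(h)}_X$ be any $X$ encoding function compatible with $\mathrm{Enc}^{(h)}_Z$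 with respect to the standard form $(x,z)\mapsto x\cdot z$ on $\mathbb{F}_{q^{k'}}^k$. For $h\in[3]$ define $\tilde Q^{(h)}=(Q'^{(h)}\circ Q^{(h)})|_S$, the restriction of the concatenated code (built with these encoding functions) to the $\mathbb{F}_q$-subspace $S=(\mathbb{F}_q[X]^{<r})^k\subseteq(\mathbb{F}_q[X]^{<k'})^k\cong\mathbb{F}_{q^{k'}}^k$, where $S$ is identified with $(\mathbb{F}_q^A)^k\cong\mathbb{F}_q^{rk}$ via $\mathrm{ev}_A$ applied componentwise. Then $(\tilde Q^{(h)})_{h\in[3]}$, with the restricted $Z$ encoding functions $\widetilde{\mathrm{Enc}}^{(h)}_Z:(\mathbb{F}_q^A)^k\to(\mathbb{F}_q^{n'})^n/\tilde Q^{(h)\perp}_X$, is a triple of CSS codes over $\mathbb{F}_q$ with parameters $[[n'n,\,rk,\,\geq d'^{(h)}d^{(h)}]]_q$ that supports a transversal $CCZ_q$ gate.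
   Context: Notation: $x\cdot y=\sum_ix_iy_i$, $x*y$ componentwise product, $V^\perp$ dual w.r.t. $\cdot$. $\mathbb{F}_q[X]^{<r}$ is the space of polynomials of degree $<r$; for $A\subseteq\mathbb{F}_q$, $\mathrm{ev}_A(f)=(f(a))_{a\in A}\in\mathbb{F}_q^A$ (an isomorphism $\mathbb{F}_q[X]^{<|A|}\to\mathbb{F}_q^A$). Composition of coset-valued maps $f:A\to\mathcal{P}(B)$, $g:B\to\mathcal{P}(C)$ is $(g\circ f)(x)=\bigcup_{y\in f(x)}g(y)$. A quantum CSS code $\mathrm{CSS}(Q_X,Q_Z)$ of length $n$ over $\mathbb{F}_q$ is a pair of subspaces $Q_X,Q_Z\subseteq\mathbb{F}_q^n$ with $Q_X^\perp\subseteq Q_Z$, with dimension $k=\dim Q_Z-\dim Q_X^\perp$ and distance $\min\{|y|:y\in(Q_X\setminus Q_Z^\perp)\cup(Q_Z\setminus Q_X^\perp)\}$; it is an $[[n,k,d]]_q$ code. $Z$ (resp. $X$) encoding functions are $\mathbb{F}_q$-linear isomorphisms $\mathrm{Enc}_Z:V\to Q_Z/Q_X^\perp$ (resp. $\mathrm{Enc}_X:V\to Q_X/Q_Z^\perp$) from a fixed $k$-dimensional $\mathbb{F}_q$-space $V$ (e.g. $\mathbb{F}_q^k$ or $\mathbb{F}_{q^k}$); they are compatible w.r.t. a bilinear form $B$ on $V$ if $B(x,z)=x'\cdot z'$ for all $x,z\in V$, $x'\in\mathrm{Enc}_X(x)$, $z'\in\mathrm{Enc}_Z(z)$. Concatenation: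 given an inner code $Q^{in}$ ($[[n^{in},k^{in}]]_{q^{in}}$) with encoding functions $\mathrm{Enc}^{in}_X,\mathrm{Enc}^{in}_Z$ on $\mathbb{F}_{q^{out}}$, $q^{out}=(q^{in})^{k^{in}}$, compatible w.r.t. $\mathrm{tr}_{\mathbb{F}_{q^{out}}/\mathbb{F}_{q^{in}}}(xz)$, and an outer code $Q^{out}$ ($[[n^{out},k^{out}]]_{q^{out}}$) with encoding functions on $\mathbb{F}_{q^{out}}^{k^{out}}$ compatible w.r.t. $x\cdot z$, the concatenated code $Q^{in}\circ Q^{out}$ is the CSS code over $\mathbb{F}_{q^{in}}$ of length $n^{in}n^{out}$ whose $X$ (resp. $Z$) space is the set of all vectors lying in some value of $\mathrm{Enc}_X=(\mathrm{Enc}^{in}_X)^{\oplus n^{out}}\circ\mathrm{Enc}^{out}_X$ (resp. $\mathrm{Enc}_Z=(\mathrm{Enc}^{in}_Z)^{\oplus n^{out}}\circ\mathrm{Enc}^{out}_Z$), with these encoding functions (domain $\mathbb{F}_{q^{out}}^{k^{out}}$ viewed as an $\mathbb{F}_{q^{in}}$-space of dimension $k^{in}k^{out}$). Restriction: for $Q=\mathrm{CSS}(Q_X,Q_Z;\mathrm{Enc}_Z)$ and a subspace $S$ of the domain, $Q|_S=\mathrm{CSS}(Q_X,\bigcup_{s\in S}\mathrm{Enc}_Z(s);\mathrm{Enc}_Z|_S)$. A triple of $[[n,k]]_q$ codes with $Z$ encoding functions on $\mathbb{F}_q^k$ supports a transversal $CCZ_q$ gate if there is $b\in\mathbb{F}_q^n$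 with $\sum_{j\in[k]}z^{(1)}_jz^{(2)}_jz^{(3)}_j=\sum_{j\in[n]}b_jz^{(1)\prime}_jz^{(2)\prime}_jz^{(3)\prime}_j$ for all $z^{(h)}\in\mathbb{F}_q^k$, $z^{(h)\prime}\in\mathrm{Enc}^{(h)}_Z(z^{(h)})$. A collection $(Q^{(h)})_{h\in[m]}$ of $[[n,k]]_q$ codes with $Z$ encoding functions $\mathrm{Enc}^{(h)}_Z:\mathbb{F}_{q^k}\to Q^{(h)}_Z/Q^{(h)\perp}_X$ is $m$-multiplication-friendly if there is an $\mathbb{F}_q$-linear $\mathrm{Dec}_Z:\mathbb{F}_q^n\to\mathbb{F}_{q^k}$ with $z_1\cdots z_m=\mathrm{Dec}_Z(z_1'*\cdots*z_m')$ for all $z_h\in\mathbb{F}_{q^k}$ and $z_h'\in\mathrm{Enc}^{(h)}_Z(z_h)$. *)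

theory Defs
  imports "HOL-Library.Function_Algebras" "HOL-Computational_Algebra.Polynomial_Factorial"
begin

text \<open>For F_q (a finite field type 'a) we use K = UNIV and mul = (*); for
F_{q^k'} = F_q[X]/(gamma) we use K = polys_lt k' and mul = (%x y. x * y mod gamma).\<close>

definition vecs :: "'s::zero set \<Rightarrow> 'i set \<Rightarrow> ('i \<Rightarrow> 's) set" where
  "vecs K I = {v. (\<forall>i. i \<notin> I \<longrightarrow> v i = 0) \<and> (\<forall>i\<in>I. v i \<in> K)}"

definition smul :: "('s \<Rightarrow> 's \<Rightarrow> 's) \<Rightarrow> 's \<Rightarrow> ('i \<Rightarrow> 's) \<Rightarrow> ('i \<Rightarrow> 's)" where
  "smul mul c v = (\<lambda>i. mul c (v i))"

definition dotp :: "('s \<Rightarrow> 's \<Rightarrow> 's::comm_monoid_add) \<Rightarrow> 'i set \<Rightarrow> ('i \<Rightarrow> 's) \<Rightarrow> ('i \<Rightarrow> 's) \<Rightarrow> 's" where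
  "dotp mul I u v = (\<Sum>i\<in>I. mul (u i) (v i))"

definition is_subspace :: "'s set \<Rightarrow> ('s \<Rightarrow> 's \<Rightarrow> 's) \<Rightarrow> 'i set \<Rightarrow> ('i \<Rightarrow> 's::ab_group_add) set \<Rightarrow> bool" where
  "is_subspace K mul I V \<longleftrightarrow> V \<subseteq> vecs K I \<and> 0 \<in> V \<and> (\<forall>u\<in>V. \<forall>v\<in>V. u + v \<in> V)
     \<and> (\<forall>c\<in>K. \<forall>v\<in>V. smul mul c v \<in> V)"

definition dual :: "'s set \<Rightarrow> ('s \<Rightarrow> 's \<Rightarrow> 's) \<Rightarrow> 'i set \<Rightarrow> ('i \<Rightarrow> 's::ab_group_add) set \<Rightarrow> ('i \<Rightarrow> 's) set" where
  "dual K mul I V = {u \<in> vecs K I. \<forall>v\<in>V. dotp mul I u v = 0}"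

definition lincomb :: "('s \<Rightarrow> 's \<Rightarrow> 's) \<Rightarrow> ('i \<Rightarrow> 's::ab_group_add) set \<Rightarrow> (('i \<Rightarrow> 's) \<Rightarrow> 's) \<Rightarrow> ('i \<Rightarrow> 's)" where
  "lincomb mul B c = (\<Sum>b\<in>B. smul mul (c b) b)"

definition has_dim :: "'s set \<Rightarrow> ('s \<Rightarrow> 's \<Rightarrow> 's) \<Rightarrow> ('i \<Rightarrow> 's::ab_group_add) set \<Rightarrow> nat \<Rightarrow> bool" where
  "has_dim K mul V d \<longleftrightarrow> (\<exists>B. finite B \<and> card B = d \<and> B \<subseteq> V \<and>
      (\<forall>c. (\<forall>b\<in>B. c b \<in> K) \<and> lincomb mul B c = 0 \<longrightarrow> (\<forall>b\<in>B. c b = 0)) \<and>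
      V = {lincomb mul B c | c. \<forall>b\<in>B. c b \<in> K})"

definition wt :: "'i set \<Rightarrow> ('i \<Rightarrow> 's::zero) \<Rightarrow> nat" where
  "wt I v = card {i \<in> I. v i \<noteq> 0}"

definition is_css :: "'s set \<Rightarrow> ('s \<Rightarrow> 's \<Rightarrow> 's) \<Rightarrow> 'i set \<Rightarrow> ('i \<Rightarrow> 's::ab_group_add) set \<Rightarrow> ('i \<Rightarrow> 's) set \<Rightarrow> bool" where
  "is_css K mul I QX QZ \<longleftrightarrow> is_subspace K mul I QX \<and> is_subspace K mul I QZ \<and> dual K mul I QX \<subseteq> QZ"

definition css_dim :: "'s set \<Rightarrow> ('s \<Rightarrow> 's \<Rightarrow> 's) \<Rightarrow> 'i set \<Rightarrow> ('i \<Rightarrow> 's::ab_group_add) set \<Rightarrow> ('i \<Rightarrow> 's) set \<Rightarrow> nat \<Rightarrow> bool" where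
  "css_dim K mul I QX QZ k \<longleftrightarrow> (\<exists>a b. has_dim K mul QZ a \<and> has_dim K mul (dual K mul I QX) b \<and> k = a - b)"

definition logicals :: "'s set \<Rightarrow> ('s \<Rightarrow> 's \<Rightarrow> 's) \<Rightarrow> 'i set \<Rightarrow> ('i \<Rightarrow> 's::ab_group_add) set \<Rightarrow> ('i \<Rightarrow> 's) set \<Rightarrow> ('i \<Rightarrow> 's) set" where
  "logicals K mul I QX QZ = (QX - dual K mul I QZ) \<union> (QZ - dual K mul I QX)"

definition css_dist :: "'s set \<Rightarrow> ('s \<Rightarrow> 's \<Rightarrow> 's) \<Rightarrow> 'i set \<Rightarrow> ('i \<Rightarrow> 's::ab_group_add) set \<Rightarrow> ('i \<Rightarrow> 's) set \<Rightarrow> nat \<Rightarrow> bool" where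
  "css_dist K mul I QX QZ d \<longleftrightarrow> (\<exists>y\<in>logicals K mul I QX QZ. wt I y = d) \<and> (\<forall>y\<in>logicals K mul I QX QZ. d \<le> wt I y)"

definition css_dist_ge :: "'s set \<Rightarrow> ('s \<Rightarrow> 's \<Rightarrow> 's) \<Rightarrow> 'i set \<Rightarrow> ('i \<Rightarrow> 's::ab_group_add) set \<Rightarrow> ('i \<Rightarrow> 's) set \<Rightarrow> nat \<Rightarrow> bool" where
  "css_dist_ge K mul I QX QZ D \<longleftrightarrow> (\<forall>y\<in>logicals K mul I QX QZ. D \<le> wt I y)"

text \<open>Encoding function: a linear isomorphism E from the domain Dom (with scalar action dsm of the
scalars K) onto the quotient Q / W, where each value E x is a coset v + W of W inside Q.
Z encoding: W = dual QX, Q = QZ. X encoding: W = dual QZ, Q = QX.\<close>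
definition is_enc :: "'s set \<Rightarrow> ('s \<Rightarrow> 's \<Rightarrow> 's) \<Rightarrow> ('i \<Rightarrow> 's::ab_group_add) set \<Rightarrow> ('i \<Rightarrow> 's) set
    \<Rightarrow> ('s \<Rightarrow> 'd::ab_group_add \<Rightarrow> 'd) \<Rightarrow> 'd set \<Rightarrow> ('d \<Rightarrow> ('i \<Rightarrow> 's) set) \<Rightarrow> bool" where
  "is_enc K mul W Q dsm Dom E \<longleftrightarrow>
     (\<forall>x\<in>Dom. \<exists>v\<in>Q. E x = (\<lambda>w. v + w) ` W) \<and>
     (\<forall>x\<in>Dom. \<forall>y\<in>Dom. \<forall>u\<in>E x. \<forall>v\<in>E y. u + v \<in> E (x + y)) \<and>
     (\<forall>c\<in>K. \<forall>x\<in>Dom. \<forall>u\<in>E x. smul mul c u \<in> E (dsm c x)) \<and>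
     inj_on E Dom \<and>
     (\<forall>v\<in>Q. \<exists>x\<in>Dom. v \<in> E x)"

definition compatible :: "('d \<Rightarrow> 'd \<Rightarrow> 's) \<Rightarrow> ('s \<Rightarrow> 's \<Rightarrow> 's::comm_monoid_add) \<Rightarrow> 'i set \<Rightarrow> 'd set
    \<Rightarrow> ('d \<Rightarrow> ('i \<Rightarrow> 's) set) \<Rightarrow> ('d \<Rightarrow> ('i \<Rightarrow> 's) set) \<Rightarrow> bool" where
  "compatible Bf mul I Dom EncX EncZ \<longleftrightarrow>
     (\<forall>x\<in>Dom. \<forall>z\<in>Dom. \<forall>x'\<in>EncX x. \<forall>z'\<in>EncZ z. Bf x z = dotp mul I x' z')"

definition transversal_ccz :: "'s set \<Rightarrow> ('s \<Rightarrow> 's \<Rightarrow> 's) \<Rightarrow> 'i set \<Rightarrow> 'j set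
    \<Rightarrow> (('j \<Rightarrow> 's) \<Rightarrow> ('i \<Rightarrow> 's::comm_monoid_add) set) \<Rightarrow> (('j \<Rightarrow> 's) \<Rightarrow> ('i \<Rightarrow> 's) set)
    \<Rightarrow> (('j \<Rightarrow> 's) \<Rightarrow> ('i \<Rightarrow> 's) set) \<Rightarrow> bool" where
  "transversal_ccz K mul I J E1 E2 E3 \<longleftrightarrow>
     (\<exists>b\<in>vecs K I. \<forall>z1\<in>vecs K J. \<forall>z2\<in>vecs K J. \<forall>z3\<in>vecs K J.
        \<forall>u1\<in>E1 z1. \<forall>u2\<in>E2 z2. \<forall>u3\<in>E3 z3.
          (\<Sum>j\<in>J. mul (mul (z1 j) (z2 j)) (z3 j)) = (\<Sum>i\<in>I. mul (mul (mul (b i) (u1 i)) (u2 i)) (u3 i)))"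

text \<open>F_q[X]^{<r}: polynomials of degree < r (the zero polynomial included, deg 0 = -infinity).\<close>
definition polys_lt :: "nat \<Rightarrow> 'a::zero poly set" where
  "polys_lt r = {p. p = 0 \<or> degree p < r}"

definition fmul :: "'a::field poly \<Rightarrow> 'a poly \<Rightarrow> 'a poly \<Rightarrow> 'a poly" where
  "fmul \<gamma> x y = (x * y) mod \<gamma>"

text \<open>Field trace tr_{F_{q^k'}/F_q}(x) = sum of Galois conjugates x^{q^i}, i < k' (a constant).\<close>
definition ftrace :: "'a::{finite,field} poly \<Rightarrow> 'a poly \<Rightarrow> 'a" where
  "ftrace \<gamma> x = coeff ((\<Sum>i<degree \<gamma>. x ^ (card (UNIV :: 'a set) ^ i)) mod \<gamma>) 0"

definition mult_friendly :: "nat \<Rightarrow> 'a::{finite,field} poly \<Rightarrow> nat \<Rightarrow> (nat \<Rightarrow> 'a poly \<Rightarrow> (nat \<Rightarrow> 'a) set) \<Rightarrow> bool" where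
  "mult_friendly m \<gamma> n' E \<longleftrightarrow>
     (\<exists>Dec :: (nat \<Rightarrow> 'a) \<Rightarrow> 'a poly.
        (\<forall>u\<in>vecs UNIV {..<n'}. Dec u \<in> polys_lt (degree \<gamma>)) \<and>
        (\<forall>u\<in>vecs UNIV {..<n'}. \<forall>v\<in>vecs UNIV {..<n'}. Dec (u + v) = Dec u + Dec v) \<and>
        (\<forall>c. \<forall>u\<in>vecs UNIV {..<n'}. Dec (smul (*) c u) = smult c (Dec u)) \<and>
        (\<forall>z u. (\<forall>h<m. z h \<in> polys_lt (degree \<gamma>) \<and> u h \<in> E h (z h)) \<longrightarrow>
            (\<Prod>h<m. z h) mod \<gamma> = Dec (\<Prod>h<m. u h)))"

text \<open>(Enc_in)^{oplus n} o Enc_out, on vectors indexed by (outer position j < n, inner position i < n').\<close>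
definition concat_enc :: "nat \<Rightarrow> nat \<Rightarrow> ('a::zero poly \<Rightarrow> (nat \<Rightarrow> 'a) set) \<Rightarrow> ('d \<Rightarrow> (nat \<Rightarrow> 'a poly) set)
     \<Rightarrow> 'd \<Rightarrow> (nat \<times> nat \<Rightarrow> 'a) set" where
  "concat_enc n n' Ein Eout x =
     (\<Union>y\<in>Eout x. {w \<in> vecs UNIV ({..<n} \<times> {..<n'}). \<forall>j<n. (\<lambda>i. w (j, i)) \<in> Ein (y j)})"

text \<open>The inverse of componentwise ev_A on S = (F_q[X]^{<r})^k, as a coset(set)-valued map.\<close>
definition ev_inv :: "nat \<Rightarrow> nat \<Rightarrow> 'a::comm_ring set \<Rightarrow> (nat \<times> 'a \<Rightarrow> 'a) \<Rightarrow> (nat \<Rightarrow> 'a poly) set" where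
  "ev_inv k r A z = {s \<in> vecs (polys_lt r) {..<k}. \<forall>j<k. \<forall>a\<in>A. poly (s j) a = z (j, a)}"

definition space_of :: "'d set \<Rightarrow> ('d \<Rightarrow> 'v set) \<Rightarrow> 'v set" where
  "space_of D E = (\<Union>x\<in>D. E x)"

end

theory Submission
  imports Defs "HOL-Library.FuncSet"
begin

lemma sum_fun_app: "(\<Sum>a\<in>A. f a) x = (\<Sum>a\<in>A. f a x)"
  by (induct A rule: infinite_finite_induct) auto

lemma vecs_finite:
  assumes "finite I" shows "finite (vecs (UNIV::'a::{finite,zero} set) I)"
proof -
  have "vecs (UNIV::'a set) I \<subseteq> (\<lambda>g i. if i \<in> I then g i else 0) ` (PiE I (\<lambda>_. UNIV))"
  proof
    fix v assume "v \<in> vecs UNIV I"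
    then show "v \<in> (\<lambda>g i. if i \<in> I then g i else 0) ` (PiE I (\<lambda>_. UNIV))"
      by (intro image_eqI[of _ _ "restrict v I"]) (auto simp: vecs_def fun_eq_iff)
  qed
  moreover have "finite (PiE I (\<lambda>_. UNIV::'a set))" using assms by (intro finite_PiE) auto
  ultimately show ?thesis by (meson finite_imageI finite_subset)
qed

lemma card_vecs:
  assumes "finite I" shows "card (vecs (UNIV::'a::{finite,zero} set) I) = card (UNIV::'a set) ^ card I"
proof -
  have "bij_betw (\<lambda>v. restrict v I) (vecs (UNIV::'a set) I) (PiE I (\<lambda>_. UNIV::'a set))"
  proof (rule bij_betwI[where g="\<lambda>g i. if i \<in> I then g i else 0"])
    show "(\<lambda>v. restrict v I) \<in> vecs UNIV I \<rightarrow> PiE I (\<lambda>_. UNIV)" by auto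
    show "(\<lambda>g i. if i \<in> I then g i else 0) \<in> PiE I (\<lambda>_. UNIV) \<rightarrow> vecs UNIV I"
      by (auto simp: vecs_def)
    show "(\<lambda>i. if i \<in> I then restrict x I i else 0) = x" if "x \<in> vecs UNIV I" for x
      using that by (auto simp: vecs_def fun_eq_iff)
    show "restrict (\<lambda>i. if i \<in> I then g i else 0) I = g" if "g \<in> PiE I (\<lambda>_. UNIV::'a set)" for g
      using that by (auto simp: fun_eq_iff PiE_def extensional_def)
  qed
  hence "card (vecs (UNIV::'a set) I) = card (PiE I (\<lambda>_. UNIV::'a set))" by (rule bij_betw_same_card)
  also have "\<dots> = card (UNIV::'a set) ^ card I" using assms by (simp add: card_PiE)
  finally show ?thesis .
qed

interpretation fvs: vector_space "smul (*) :: 'a::field \<Rightarrow> ('i \<Rightarrow> 'a) \<Rightarrow> ('i \<Rightarrow> 'a)"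
  by unfold_locales (auto simp: smul_def fun_eq_iff algebra_simps)

lemma lincomb_eq_sum: "lincomb (*) B c = (\<Sum>v\<in>B. smul (*) (c v) v)"
  by (simp add: lincomb_def)

lemma has_dim_card:
  fixes V :: "('i \<Rightarrow> 'a::{finite,field}) set"
  assumes "has_dim UNIV (*) V d" shows "finite V" "card V = card (UNIV::'a set) ^ d"
proof -
  obtain B where B: "finite B" "card B = d" "B \<subseteq> V"
    and ind: "\<And>c. lincomb (*) B c = 0 \<Longrightarrow> (\<forall>b\<in>B. c b = 0)"
    and V: "V = {lincomb (*) B c |c. True}"
    using assms unfolding has_dim_def by auto
  have lc: "lincomb (*) B c = lincomb (*) B (restrict c B)" for c
    unfolding lincomb_def by (intro sum.cong) (auto simp: restrict_def)
  have V': "V = (\<lambda>c. lincomb (*) B c) ` (B \<rightarrow>\<^sub>E UNIV)"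
  proof
    show "V \<subseteq> (\<lambda>c. lincomb (*) B c) ` (B \<rightarrow>\<^sub>E UNIV)"
    proof
      fix v assume "v \<in> V"
      then obtain c where "v = lincomb (*) B c" using V by auto
      thus "v \<in> (\<lambda>c. lincomb (*) B c) ` (B \<rightarrow>\<^sub>E UNIV)"
        using lc by (intro image_eqI[of _ _ "restrict c B"]) auto
    qed
  qed (use V in auto)
  have inj: "inj_on (\<lambda>c. lincomb (*) B c) (B \<rightarrow>\<^sub>E UNIV)"
  proof (rule inj_onI)
    fix c1 c2 assume c: "c1 \<in> B \<rightarrow>\<^sub>E UNIV" "c2 \<in> B \<rightarrow>\<^sub>E UNIV"
      and eq: "lincomb (*) B c1 = lincomb (*) B c2"
    have "lincomb (*) B (\<lambda>b. c1 b - c2 b) = lincomb (*) B c1 - lincomb (*) B c2"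
      unfolding lincomb_def smul_def
      by (simp add: fun_eq_iff sum_fun_app sum_subtractf left_diff_distrib)
    with eq have "\<forall>b\<in>B. c1 b - c2 b = 0" using ind[of "\<lambda>b. c1 b - c2 b"] by simp
    with c show "c1 = c2" by (auto simp: fun_eq_iff PiE_def extensional_def)
  qed
  show "finite V" using V' B by (simp add: finite_PiE)
  have "card V = card (B \<rightarrow>\<^sub>E (UNIV::'a set))" using V' inj by (simp add: card_image)
  also have "\<dots> = card (UNIV::'a set) ^ d" using B by (simp add: card_PiE)
  finally show "card V = card (UNIV::'a set) ^ d" .
qed

lemma has_dim_unique:
  fixes V :: "('i \<Rightarrow> 'a::{finite,field}) set"
  assumes "has_dim UNIV (*) V d" "has_dim UNIV (*) V e" shows "d = e"
proof -
  have "card (UNIV::'a set) ^ d = card (UNIV::'a set) ^ e" using has_dim_card[OF assms(1)] has_dim_card[OF assms(2)] by simp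
  moreover have "card (UNIV::'a set) \<ge> 2"
  proof -
    have "{0::'a, 1} \<subseteq> UNIV" by simp
    hence "card {0::'a,1} \<le> card (UNIV::'a set)" by (intro card_mono) auto
    thus ?thesis by simp
  qed
  ultimately show ?thesis by (simp add: power_inject_exp)
qed

lemma subspace_fvs:
  assumes "is_subspace UNIV (*) I V" shows "fvs.subspace V"
  using assms unfolding is_subspace_def fvs.subspace_def by auto

lemma exists_dim:
  fixes V :: "('i \<Rightarrow> 'a::{finite,field}) set"
  assumes "is_subspace UNIV (*) I V" "finite I" shows "\<exists>d. has_dim UNIV (*) V d"
proof -
  obtain B where B: "B \<subseteq> V" "fvs.independent B" "V \<subseteq> fvs.span B"
    using fvs.basis_exists by metis
  have fV: "finite V" using assms vecs_finite[OF assms(2)] unfolding is_subspace_def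
    by (meson finite_subset)
  hence fB: "finite B" using B(1) finite_subset by auto
  have "fvs.span B \<subseteq> V" using B(1) subspace_fvs[OF assms(1)] by (rule fvs.span_minimal)
  hence sp: "fvs.span B = V" using B by auto
  have "has_dim UNIV (*) V (card B)"
    unfolding has_dim_def
  proof (intro exI[of _ B] conjI allI impI)
    show "\<forall>b\<in>B. c b = 0" if "(\<forall>b\<in>B. c b \<in> UNIV) \<and> lincomb (*) B c = 0" for c
      using B(2) that fB unfolding fvs.dependent_finite[OF fB] lincomb_def by auto
    show "V = {lincomb (*) B c |c. \<forall>b\<in>B. c b \<in> UNIV}"
      using sp fvs.span_finite[OF fB] unfolding lincomb_def by auto
  qed (use fB B in auto)
  thus ?thesis by blast
qed


lemma subsp_diff:
  fixes V :: "('i \<Rightarrow> 'a::ring_1) set"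
  assumes "is_subspace UNIV (*) I V" "u \<in> V" "v \<in> V" shows "u - v \<in> V"
proof -
  have "smul (*) (-1) v \<in> V" using assms unfolding is_subspace_def by auto
  moreover have "smul (*) (-1) v = - v" by (simp add: smul_def fun_eq_iff)
  ultimately show ?thesis using assms unfolding is_subspace_def by (metis diff_conv_add_uminus)
qed

lemma subsp_add: "is_subspace K mul I V \<Longrightarrow> u \<in> V \<Longrightarrow> v \<in> V \<Longrightarrow> u + v \<in> V"
  unfolding is_subspace_def by auto
lemma subsp_smul: "is_subspace K mul I V \<Longrightarrow> c \<in> K \<Longrightarrow> v \<in> V \<Longrightarrow> smul mul c v \<in> V"
  unfolding is_subspace_def by auto
lemma subsp_zero: "is_subspace K mul I V \<Longrightarrow> 0 \<in> V"
  unfolding is_subspace_def by auto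
lemma subsp_vecs: "is_subspace K mul I V \<Longrightarrow> v \<in> V \<Longrightarrow> v \<in> vecs K I"
  unfolding is_subspace_def by auto

lemma dotp_insert: "finite F \<Longrightarrow> i \<notin> F \<Longrightarrow> dotp (*) (insert i F) x y = x i * y i + dotp (*) F x y"
  unfolding dotp_def by simp

lemma dotp_diff_smul: "dotp (*) F (x - smul (*) c v) y = dotp (*) F x y - c * dotp (*) F v (y::'i\<Rightarrow>'a::comm_ring)"
proof -
  have "dotp (*) F (x - smul (*) c v) y = (\<Sum>i\<in>F. x i * y i - c * (v i * y i))"
    unfolding dotp_def smul_def by (simp add: algebra_simps)
  also have "\<dots> = dotp (*) F x y - c * dotp (*) F v y"
    unfolding dotp_def by (simp add: sum_subtractf sum_distrib_left)
  finally show ?thesis .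
qed

lemma dotp_add_smul: "dotp (*) F (x + smul (*) c v) y = dotp (*) F x y + c * dotp (*) F v (y::'i\<Rightarrow>'a::comm_ring)"
proof -
  have "dotp (*) F (x + smul (*) c v) y = (\<Sum>i\<in>F. x i * y i + c * (v i * y i))"
    unfolding dotp_def smul_def by (simp add: algebra_simps)
  also have "\<dots> = dotp (*) F x y + c * dotp (*) F v y"
    unfolding dotp_def by (simp add: sum.distrib sum_distrib_left)
  finally show ?thesis .
qed

lemma dotp_comm: "dotp (*) F x y = dotp (*) F y (x::'i \<Rightarrow> 'a::comm_ring)"
  unfolding dotp_def by (simp add: mult.commute)

lemma dotp_cong: "(\<And>i. i \<in> F \<Longrightarrow> x i = x' i) \<Longrightarrow> dotp mul F x y = dotp mul F x' y"
  unfolding dotp_def by simp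

lemma double_dual:
  fixes V :: "('i \<Rightarrow> 'a::field) set"
  assumes "finite I" "is_subspace UNIV (*) I V" "u \<in> vecs UNIV I"
     "\<forall>w\<in>vecs UNIV I. (\<forall>v\<in>V. dotp (*) I w v = 0) \<longrightarrow> dotp (*) I u w = 0"
  shows "u \<in> V"
  using assms
proof (induction I arbitrary: V u rule: finite_induct)
  case empty
  then have "u = 0" by (auto simp: vecs_def fun_eq_iff)
  thus ?case using empty subsp_zero by blast
next
  case (insert i F)
  define e :: "'i \<Rightarrow> 'a" where "e = (\<lambda>x. if x = i then 1 else 0)"
  have e_vecs: "e \<in> vecs UNIV (insert i F)" by (auto simp: e_def vecs_def)
  have dF_e: "dotp (*) F y e = 0" "dotp (*) F e y = 0" for y
    using insert(2) unfolding dotp_def e_def by (auto intro!: sum.neutral)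
  show ?case
  proof (cases "\<forall>v\<in>V. v i = 0")
    case True
    have VF: "is_subspace UNIV (*) F V"
      using insert(4) True unfolding is_subspace_def vecs_def by (auto simp: subset_iff) (metis insert_iff)
    have ei: "e i = 1" by (simp add: e_def)
    have "\<forall>v\<in>V. dotp (*) (insert i F) e v = 0" using True by (simp add: dotp_insert[OF insert(1,2)] dF_e)
    hence "dotp (*) (insert i F) u e = 0" using insert(6) e_vecs by blast
    hence ui: "u i = 0" by (simp add: dotp_insert[OF insert(1,2)] dF_e ei)
    have uF: "u \<in> vecs UNIV F" using insert(5) ui by (auto simp: vecs_def)
    show ?thesis
    proof (rule insert.IH[OF VF uF], intro ballI impI)
      fix w assume w: "w \<in> vecs UNIV F" "\<forall>v\<in>V. dotp (*) F w v = 0"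
      have wi: "w i = 0" using w(1) insert(2) by (auto simp: vecs_def)
      have "w \<in> vecs UNIV (insert i F)" using w(1) by (auto simp: vecs_def)
      moreover have "\<forall>v\<in>V. dotp (*) (insert i F) w v = 0"
        using w(2) wi by (simp add: dotp_insert[OF insert(1,2)])
      ultimately have "dotp (*) (insert i F) u w = 0" using insert(6) by blast
      thus "dotp (*) F u w = 0" using wi by (simp add: dotp_insert[OF insert(1,2)])
    qed
  next
    case False
    then obtain v0 where v0: "v0 \<in> V" "v0 i \<noteq> 0" by auto
    define v1 where "v1 = smul (*) (inverse (v0 i)) v0"
    have v1V: "v1 \<in> V" using subsp_smul[OF insert(4)] v0 v1_def by auto
    have v1i: "v1 i = 1" using v0 by (simp add: v1_def smul_def)
    define V' where "V' = (\<lambda>v. v - smul (*) (v i) v1) ` V"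
    have V'V: "V' \<subseteq> V" unfolding V'_def
      using subsp_diff[OF insert(4)] subsp_smul[OF insert(4)] v1V by auto
    have V'F: "is_subspace UNIV (*) F V'"
      unfolding is_subspace_def
    proof (intro conjI ballI subsetI)
      fix x assume "x \<in> V'"
      then obtain v where v: "v \<in> V" "x = v - smul (*) (v i) v1" unfolding V'_def by auto
      have vv: "v \<in> vecs UNIV (insert i F)" "v1 \<in> vecs UNIV (insert i F)"
        using v v1V subsp_vecs[OF insert(4)] by auto
      have "x j = 0" if "j \<notin> F" for j
      proof (cases "j = i")
        case True thus ?thesis using v v1i by (simp add: smul_def)
      next
        case False thus ?thesis using v that vv by (simp add: vecs_def smul_def)
      qed
      thus "x \<in> vecs UNIV F" by (simp add: vecs_def)
    next
      show "0 \<in> V'" unfolding V'_def using subsp_zero[OF insert(4)]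
        by (intro image_eqI[of _ _ 0]) (auto simp: smul_def fun_eq_iff)
    next
      fix x y assume "x \<in> V'" "y \<in> V'"
      then obtain v w where v: "v \<in> V" "x = v - smul (*) (v i) v1"
        and w: "w \<in> V" "y = w - smul (*) (w i) v1" unfolding V'_def by auto
      have "x + y = (v + w) - smul (*) ((v + w) i) v1"
        using v w by (simp add: smul_def fun_eq_iff distrib_left distrib_right)
      thus "x + y \<in> V'" unfolding V'_def using subsp_add[OF insert(4) v(1) w(1)] by blast
    next
      fix c x assume "x \<in> V'"
      then obtain v where v: "v \<in> V" "x = v - smul (*) (v i) v1" unfolding V'_def by auto
      have "smul (*) c x = smul (*) c v - smul (*) (smul (*) c v i) v1"
        using v by (simp add: smul_def fun_eq_iff right_diff_distrib mult.assoc)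
      thus "smul (*) c x \<in> V'" unfolding V'_def using subsp_smul[OF insert(4) _ v(1)] by blast
    qed
    define u'' where "u'' = u - smul (*) (u i) v1"
    have v1vec: "v1 \<in> vecs UNIV (insert i F)" using v1V subsp_vecs[OF insert(4)] by auto
    have "u'' j = 0" if "j \<notin> F" for j
    proof (cases "j = i")
      case True thus ?thesis using v1i by (simp add: u''_def smul_def)
    next
      case False thus ?thesis using that insert(5) v1vec by (simp add: vecs_def u''_def smul_def)
    qed
    hence u''F: "u'' \<in> vecs UNIV F" by (simp add: vecs_def)
    have "u'' \<in> V'"
    proof (rule insert.IH[OF V'F u''F], intro ballI impI)
      fix w' assume w': "w' \<in> vecs UNIV F" "\<forall>v\<in>V'. dotp (*) F w' v = 0"
      have w'i: "w' i = 0" using w'(1) insert(2) by (auto simp: vecs_def)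
      define t where "t = - dotp (*) F w' v1"
      define w where "w = w' + smul (*) t e"
      have wi: "w i = t" using w'i by (simp add: w_def smul_def e_def)
      have wF: "dotp (*) F w y = dotp (*) F w' y" for y
        using insert(2) by (intro dotp_cong) (auto simp: w_def smul_def e_def)
      have wvec: "w \<in> vecs UNIV (insert i F)" using w'(1) e_vecs
        by (auto simp: vecs_def w_def smul_def e_def)
      have "\<forall>v\<in>V. dotp (*) (insert i F) w v = 0"
      proof
        fix v assume v: "v \<in> V"
        have "v - smul (*) (v i) v1 \<in> V'" unfolding V'_def using v by blast
        hence "dotp (*) F w' (v - smul (*) (v i) v1) = 0" using w'(2) by blast
        hence "dotp (*) F w' v = v i * dotp (*) F w' v1"
          using dotp_diff_smul[of F v "v i" v1 w'] dotp_comm by (metis eq_iff_diff_eq_0)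
        thus "dotp (*) (insert i F) w v = 0"
          by (simp add: dotp_insert[OF insert(1,2)] wi wF t_def)
      qed
      hence "dotp (*) (insert i F) u w = 0" using insert(6) wvec by blast
      hence A: "u i * t + dotp (*) F u w' = 0"
        by (simp add: dotp_insert[OF insert(1,2)] wi dotp_comm[of F u] wF)
      have "dotp (*) F u'' w' = dotp (*) F u w' - u i * dotp (*) F v1 w'"
        unfolding u''_def by (rule dotp_diff_smul)
      also have "\<dots> = dotp (*) F u w' + u i * t" by (simp add: t_def dotp_comm[of F v1])
      finally show "dotp (*) F u'' w' = 0" using A by (simp add: algebra_simps)
    qed
    hence "u'' \<in> V" using V'V by auto
    moreover have "u = u'' + smul (*) (u i) v1" by (simp add: u''_def)
    moreover have "smul (*) (u i) v1 \<in> V" using subsp_smul[OF insert(4) _ v1V] by simp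
    ultimately show ?thesis using subsp_add[OF insert(4)] by metis
  qed
qed


lemma plt_iff: "k > 0 \<Longrightarrow> p \<in> polys_lt k \<longleftrightarrow> degree p < k"
  by (auto simp: polys_lt_def)

lemma plt_zero[simp]: "0 \<in> polys_lt k" by (simp add: polys_lt_def)

lemma plt_add: "p \<in> polys_lt k \<Longrightarrow> q \<in> polys_lt k \<Longrightarrow> p + q \<in> polys_lt k"
  for p q :: "'a::field poly"
  unfolding polys_lt_def using degree_add_le_max[of p q] by auto

lemma plt_uminus: "p \<in> polys_lt k \<Longrightarrow> - p \<in> polys_lt k"
  for p q :: "'a::field poly"
  unfolding polys_lt_def by auto

lemma plt_diff: "p \<in> polys_lt k \<Longrightarrow> q \<in> polys_lt k \<Longrightarrow> p - q \<in> polys_lt k"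
  for p q :: "'a::field poly"
  using plt_add[of p k "-q"] plt_uminus by fastforce

lemma plt_smult: "p \<in> polys_lt k \<Longrightarrow> smult c p \<in> polys_lt k"
  for p q :: "'a::field poly"
  unfolding polys_lt_def using degree_smult_le le_less_trans by fastforce

lemma plt_sum: "(\<And>i. i \<in> S \<Longrightarrow> f i \<in> polys_lt k) \<Longrightarrow> (\<Sum>i\<in>S. f i :: 'a::field poly) \<in> polys_lt k"
  by (induct S rule: infinite_finite_induct) (auto intro: plt_add)

lemma plt_const: "k > 0 \<Longrightarrow> [:c:] \<in> polys_lt k"
  by (simp add: polys_lt_def)

lemma plt_mono: "p \<in> polys_lt r \<Longrightarrow> r \<le> k \<Longrightarrow> p \<in> polys_lt k"
  unfolding polys_lt_def by auto

lemma fmul_plt: "(\<gamma>::'a::field poly) \<noteq> 0 \<Longrightarrow> fmul \<gamma> x y \<in> polys_lt (degree \<gamma>)"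
  unfolding fmul_def polys_lt_def using degree_mod_less by blast

lemma plt_mod: "p \<in> polys_lt (degree \<gamma>) \<Longrightarrow> p mod (\<gamma>::'a::field poly) = p"
  unfolding polys_lt_def by (auto intro: mod_poly_less)

lemma fmul_comm: "fmul \<gamma> x y = fmul \<gamma> y x"
  by (simp add: fmul_def mult.commute)

lemma fmul_add_left: "fmul \<gamma> (x + y) z = fmul \<gamma> x z + fmul \<gamma> y z"
  by (simp add: fmul_def distrib_right poly_mod_add_left)

lemma fmul_add_right: "fmul \<gamma> z (x + y) = fmul \<gamma> z x + fmul \<gamma> z y"
  by (simp add: fmul_def distrib_left poly_mod_add_left)

lemma fmul_diff_left: "fmul \<gamma> (x - y) z = fmul \<gamma> x z - fmul \<gamma> y z"
  by (simp add: fmul_def left_diff_distrib poly_mod_diff_left)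

lemma fmul_zero[simp]: "fmul \<gamma> 0 x = 0" "fmul \<gamma> x 0 = 0"
  by (simp_all add: fmul_def)

lemma fmul_assoc: "fmul \<gamma> (fmul \<gamma> a b) c = fmul \<gamma> a (fmul \<gamma> b c)"
  unfolding fmul_def by (metis mod_mult_left_eq mod_mult_right_eq mult.assoc)

lemma fmul_mod3: "fmul \<gamma> (fmul \<gamma> a b) c = (a * b * c) mod \<gamma>"
  unfolding fmul_def by (metis mod_mult_left_eq)

lemma fmul_one: "x \<in> polys_lt (degree \<gamma>) \<Longrightarrow> fmul \<gamma> 1 x = x"
  by (simp add: fmul_def plt_mod)

lemma fmul_const: "x \<in> polys_lt (degree \<gamma>) \<Longrightarrow> fmul \<gamma> [:c:] x = smult c x"
  using plt_mod[OF plt_smult[of x _ c]] by (simp add: fmul_def)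

lemma fmul_smult_left: "fmul \<gamma> (smult c a) b = smult c (fmul \<gamma> a b)"
  by (simp add: fmul_def mod_smult_left)

lemma fmul_sum_right: "fmul \<gamma> a (\<Sum>i\<in>S. f i) = (\<Sum>i\<in>S. fmul \<gamma> a (f i))"
  by (induct S rule: infinite_finite_induct) (auto simp: fmul_add_right)

definition grp :: "'v::ab_group_add set \<Rightarrow> bool" where
  "grp W \<longleftrightarrow> 0 \<in> W \<and> (\<forall>a\<in>W. \<forall>b\<in>W. a - b \<in> W)"

lemma grp_zero: "grp W \<Longrightarrow> 0 \<in> W" by (simp add: grp_def)
lemma grp_diff: "grp W \<Longrightarrow> a \<in> W \<Longrightarrow> b \<in> W \<Longrightarrow> a - b \<in> W" by (simp add: grp_def)
lemma grp_uminus: "grp W \<Longrightarrow> a \<in> W \<Longrightarrow> - a \<in> W" using grp_diff[of W 0 a] by (simp add: grp_def)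
lemma grp_add: "grp W \<Longrightarrow> a \<in> W \<Longrightarrow> b \<in> W \<Longrightarrow> a + b \<in> W"
  using grp_diff[of W a "-b"] grp_uminus by fastforce

lemma dual_grp_times: "grp (dual UNIV (*) I (V::('i \<Rightarrow> 'a::comm_ring) set))"
  unfolding grp_def dual_def dotp_def vecs_def
  by (auto simp: left_diff_distrib sum_subtractf)

lemma dual_grp_fmul: "grp (dual (polys_lt k) (fmul \<gamma>) I V)"
  unfolding grp_def dual_def dotp_def vecs_def
  by (auto simp: fmul_diff_left sum_subtractf plt_diff)

lemma dual_sub: "dual K mul I V \<subseteq> vecs K I" by (auto simp: dual_def)

locale enc =
  fixes K :: "'s::ab_group_add set" and mul :: "'s \<Rightarrow> 's \<Rightarrow> 's" and W Q :: "('i \<Rightarrow> 's) set"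
    and dsm :: "'s \<Rightarrow> 'd::ab_group_add \<Rightarrow> 'd" and Dom :: "'d set" and E :: "'d \<Rightarrow> ('i \<Rightarrow> 's) set"
  assumes is_enc: "is_enc K mul W Q dsm Dom E" and grpW: "grp W"
    and dom0: "0 \<in> Dom" and dom_diff: "x \<in> Dom \<Longrightarrow> y \<in> Dom \<Longrightarrow> x - y \<in> Dom"
begin

lemma dom_add: "x \<in> Dom \<Longrightarrow> y \<in> Dom \<Longrightarrow> x + y \<in> Dom"
  using dom_diff[of x "0 - y"] dom_diff[of 0 y] dom0 by simp

lemma coset_rep: "x \<in> Dom \<Longrightarrow> \<exists>v\<in>Q. E x = (\<lambda>w. v + w) ` W"
  using is_enc unfolding is_enc_def by blast

lemma add_mem: "x \<in> Dom \<Longrightarrow> y \<in> Dom \<Longrightarrow> u \<in> E x \<Longrightarrow> v \<in> E y \<Longrightarrow> u + v \<in> E (x + y)"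
  using is_enc unfolding is_enc_def by blast

lemma scal_mem: "c \<in> K \<Longrightarrow> x \<in> Dom \<Longrightarrow> u \<in> E x \<Longrightarrow> smul mul c u \<in> E (dsm c x)"
  using is_enc unfolding is_enc_def by blast

lemma inj: "inj_on E Dom" using is_enc unfolding is_enc_def by blast

lemma surj: "v \<in> Q \<Longrightarrow> \<exists>x\<in>Dom. v \<in> E x" using is_enc unfolding is_enc_def by blast

lemma coset: assumes "x \<in> Dom" "u \<in> E x" shows "E x = (\<lambda>w. u + w) ` W"
proof -
  obtain v where v: "E x = (\<lambda>w. v + w) ` W" using coset_rep assms by blast
  then obtain w0 where w0: "w0 \<in> W" "u = v + w0" using assms by auto
  show ?thesis
  proof
    show "E x \<subseteq> (\<lambda>w. u + w) ` W"
    proof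
      fix y assume "y \<in> E x"
      then obtain w where "w \<in> W" "y = v + w" using v by auto
      thus "y \<in> (\<lambda>w. u + w) ` W" using w0 grp_diff[OF grpW]
        by (intro image_eqI[of _ _ "w - w0"]) auto
    qed
    show "(\<lambda>w. u + w) ` W \<subseteq> E x"
    proof
      fix y assume "y \<in> (\<lambda>w. u + w) ` W"
      then obtain w where "w \<in> W" "y = u + w" by auto
      thus "y \<in> E x" using v w0 grp_add[OF grpW]
        by (auto intro!: image_eqI[of _ _ "w0 + w"] simp: add.assoc)
    qed
  qed
qed

lemma nonempty: "x \<in> Dom \<Longrightarrow> \<exists>u. u \<in> E x"
  using coset_rep grp_zero[OF grpW] by blast

lemma diffW: "x \<in> Dom \<Longrightarrow> u \<in> E x \<Longrightarrow> u' \<in> E x \<Longrightarrow> u - u' \<in> W"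
proof -
  assume a: "x \<in> Dom" "u \<in> E x" "u' \<in> E x"
  then obtain w where "w \<in> W" "u = u' + w" using coset[OF a(1,3)] by auto
  thus ?thesis by simp
qed

lemma addW: "x \<in> Dom \<Longrightarrow> u \<in> E x \<Longrightarrow> w \<in> W \<Longrightarrow> u + w \<in> E x"
  using coset by blast

lemma E0: "E 0 = W"
proof -
  obtain u where u: "u \<in> E 0" using nonempty dom0 by blast
  have "u + u \<in> E 0" using add_mem[OF dom0 dom0 u u] by simp
  hence uW: "u \<in> W" using diffW[OF dom0 _ u] by fastforce
  have "E 0 = (\<lambda>w. u + w) ` W" using coset[OF dom0 u] .
  also have "\<dots> = W"
  proof
    show "(\<lambda>w. u + w) ` W \<subseteq> W" using grp_add[OF grpW uW] by auto
    show "W \<subseteq> (\<lambda>w. u + w) ` W"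
    proof
      fix w assume "w \<in> W"
      thus "w \<in> (\<lambda>w. u + w) ` W" using grp_diff[OF grpW _ uW] by (intro image_eqI[of _ _ "w - u"]) auto
    qed
  qed
  finally show ?thesis .
qed

lemma same: assumes "x \<in> Dom" "y \<in> Dom" "u \<in> E x" "u \<in> E y" shows "x = y"
proof -
  have "E x = E y" using coset[OF assms(1,3)] coset[OF assms(2,4)] by simp
  thus ?thesis using inj_onD[OF inj _ assms(1,2)] by blast
qed

lemma inW: "x \<in> Dom \<Longrightarrow> u \<in> E x \<Longrightarrow> u \<in> W \<Longrightarrow> x = 0"
  using same[of x 0 u] E0 dom0 by blast

lemma diff_mem: assumes "x \<in> Dom" "y \<in> Dom" "u \<in> E x" "v \<in> E y"
  shows "u - v \<in> E (x - y)"
proof -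
  have xy: "x - y \<in> Dom" using dom_diff assms by auto
  obtain t where t: "t \<in> E (x - y)" using nonempty xy by blast
  have "t + v \<in> E x" using add_mem[OF xy assms(2) t assms(4)] by simp
  hence "u - (t + v) \<in> W" using diffW assms by blast
  hence "t + (u - (t + v)) \<in> E (x - y)" using addW[OF xy t] by blast
  thus ?thesis by (simp add: algebra_simps)
qed

lemma sub_Q: assumes "W \<subseteq> Q" "grp Q" "x \<in> Dom" shows "E x \<subseteq> Q"
proof -
  obtain v where "v \<in> Q" "E x = (\<lambda>w. v + w) ` W" using coset_rep assms by blast
  thus ?thesis using assms grp_add[OF assms(2)] by auto
qed

end

lemma subsp_grp:
  fixes V :: "('i \<Rightarrow> 'a::ring_1) set"
  assumes "is_subspace UNIV (*) I V" shows "grp V"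
  using assms subsp_diff subsp_zero unfolding grp_def by blast

lemma subsp_grp_fmul:
  assumes "is_subspace (polys_lt (degree \<gamma>)) (fmul \<gamma>) I V" "degree \<gamma> > 0" shows "grp V"
proof -
  have neg: "smul (fmul \<gamma>) [:-1:] v = - v" if "v \<in> V" for v
  proof -
    have "v \<in> vecs (polys_lt (degree \<gamma>)) I" using subsp_vecs assms that by blast
    hence vi: "v i \<in> polys_lt (degree \<gamma>)" for i by (cases "i \<in> I") (auto simp: vecs_def)
    show ?thesis unfolding smul_def fun_eq_iff by (simp add: fmul_const[OF vi])
  qed
  show ?thesis unfolding grp_def
  proof (intro conjI ballI)
    show "0 \<in> V" using subsp_zero assms by blast
    fix a b assume "a \<in> V" "b \<in> V"
    thus "a - b \<in> V" using neg[of b] subsp_add[OF assms(1)] subsp_smul[OF assms(1) plt_const[OF assms(2)]]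
      by (metis diff_conv_add_uminus)
  qed
qed


locale inner_code =
  fixes \<gamma> :: "'a::{finite,field} poly" and n' :: nat and QX QZ :: "(nat \<Rightarrow> 'a) set"
    and EncZ EncX :: "'a poly \<Rightarrow> (nat \<Rightarrow> 'a) set"
  assumes g0: "\<gamma> \<noteq> 0" and kpos: "degree \<gamma> > 0"
    and css: "is_css UNIV (*) {..<n'} QX QZ"
    and encZ: "is_enc UNIV (*) (dual UNIV (*) {..<n'} QX) QZ smult (polys_lt (degree \<gamma>)) EncZ"
    and encX: "is_enc UNIV (*) (dual UNIV (*) {..<n'} QZ) QX smult (polys_lt (degree \<gamma>)) EncX"
    and compat: "compatible (\<lambda>x z. ftrace \<gamma> (fmul \<gamma> x z)) (*) {..<n'} (polys_lt (degree \<gamma>)) EncX EncZ"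
begin

abbreviation "P \<equiv> polys_lt (degree \<gamma>)"
abbreviation "T \<equiv> ftrace \<gamma>"

sublocale Z: enc UNIV "(*)" "dual UNIV (*) {..<n'} QX" QZ smult P EncZ
  by unfold_locales (auto simp: encZ dual_grp_times plt_diff)

sublocale X: enc UNIV "(*)" "dual UNIV (*) {..<n'} QZ" QX smult P EncX
  by unfold_locales (auto simp: encX dual_grp_times plt_diff)

lemma QXs: "is_subspace UNIV (*) {..<n'} QX" using css by (simp add: is_css_def)
lemma QZs: "is_subspace UNIV (*) {..<n'} QZ" using css by (simp add: is_css_def)
lemma dXZ: "dual UNIV (*) {..<n'} QX \<subseteq> QZ" using css by (simp add: is_css_def)

lemma dZX: "dual UNIV (*) {..<n'} QZ \<subseteq> QX"
proof
  fix u assume u: "u \<in> dual UNIV (*) {..<n'} QZ"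
  show "u \<in> QX"
  proof (rule double_dual[OF _ QXs])
    show "u \<in> vecs UNIV {..<n'}" using u by (auto simp: dual_def)
    show "\<forall>w\<in>vecs UNIV {..<n'}. (\<forall>v\<in>QX. dotp (*) {..<n'} w v = 0) \<longrightarrow> dotp (*) {..<n'} u w = 0"
    proof (intro ballI impI)
      fix w assume "w \<in> vecs UNIV {..<n'}" "\<forall>v\<in>QX. dotp (*) {..<n'} w v = 0"
      hence "w \<in> QZ" using dXZ by (auto simp: dual_def)
      thus "dotp (*) {..<n'} u w = 0" using u by (auto simp: dual_def)
    qed
  qed simp
qed

lemma EZ_sub: "x \<in> P \<Longrightarrow> EncZ x \<subseteq> QZ"
  using Z.sub_Q[OF dXZ subsp_grp[OF QZs]] .
lemma EX_sub: "x \<in> P \<Longrightarrow> EncX x \<subseteq> QX"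
  using X.sub_Q[OF dZX subsp_grp[OF QXs]] .
lemma EZ_vecs: "x \<in> P \<Longrightarrow> u \<in> EncZ x \<Longrightarrow> u \<in> vecs UNIV {..<n'}"
  using EZ_sub QZs subsp_vecs by blast
lemma EX_vecs: "x \<in> P \<Longrightarrow> u \<in> EncX x \<Longrightarrow> u \<in> vecs UNIV {..<n'}"
  using EX_sub QXs subsp_vecs by blast

lemma compat': "x \<in> P \<Longrightarrow> z \<in> P \<Longrightarrow> x' \<in> EncX x \<Longrightarrow> z' \<in> EncZ z \<Longrightarrow>
   T (fmul \<gamma> x z) = dotp (*) {..<n'} x' z'"
  using compat unfolding compatible_def by blast

lemma one_P: "1 \<in> P" using plt_const[OF kpos, of 1] by (simp add: one_pCons)

lemma T_add: assumes "a \<in> P" "b \<in> P" shows "T (a + b) = T a + T b"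
proof -
  obtain x' where x': "x' \<in> EncX a" using X.nonempty assms by blast
  obtain y' where y': "y' \<in> EncX b" using X.nonempty assms by blast
  obtain z' where z': "z' \<in> EncZ 1" using Z.nonempty one_P by blast
  have s: "x' + y' \<in> EncX (a + b)" using X.add_mem assms x' y' by blast
  have ab: "a + b \<in> P" using plt_add assms by blast
  have f: "fmul \<gamma> c 1 = c" if "c \<in> P" for c using fmul_one[OF that] fmul_comm by metis
  have "T (a + b) = dotp (*) {..<n'} (x' + y') z'" using compat'[OF ab one_P s z'] f[OF ab] by simp
  also have "\<dots> = dotp (*) {..<n'} x' z' + dotp (*) {..<n'} y' z'"
    unfolding dotp_def by (simp add: distrib_right sum.distrib)
  also have "\<dots> = T a + T b" using compat'[OF assms(1) one_P x' z'] compat'[OF assms(2) one_P y' z'] f assms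
    by simp
  finally show ?thesis .
qed

lemma T_smult: assumes "a \<in> P" shows "T (smult c a) = c * T a"
proof -
  obtain x' where x': "x' \<in> EncX a" using X.nonempty assms by blast
  obtain z' where z': "z' \<in> EncZ 1" using Z.nonempty one_P by blast
  have s: "smul (*) c x' \<in> EncX (smult c a)" using X.scal_mem assms x' by blast
  have ab: "smult c a \<in> P" using plt_smult assms by blast
  have f: "fmul \<gamma> d 1 = d" if "d \<in> P" for d using fmul_one[OF that] fmul_comm by metis
  have "T (smult c a) = dotp (*) {..<n'} (smul (*) c x') z'" using compat'[OF ab one_P s z'] f[OF ab] by simp
  also have "\<dots> = c * dotp (*) {..<n'} x' z'"
    unfolding dotp_def smul_def by (simp add: sum_distrib_left mult.assoc)
  also have "\<dots> = c * T a" using compat'[OF assms(1) one_P x' z'] f assms by simp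
  finally show ?thesis .
qed

lemma T_zero: "T 0 = 0" using T_smult[of 0 0] by simp

lemma T_sum: "(\<And>i. i \<in> S \<Longrightarrow> f i \<in> P) \<Longrightarrow> T (\<Sum>i\<in>S. f i) = (\<Sum>i\<in>S. T (f i))"
proof (induct S rule: infinite_finite_induct)
  case (insert x F)
  thus ?case using T_add[of "f x" "sum f F"] plt_sum[of F f] by simp
qed (auto simp: T_zero)

lemma ND: assumes "\<beta> \<in> P" "\<forall>c\<in>P. T (fmul \<gamma> c \<beta>) = 0" shows "\<beta> = 0"
proof -
  obtain z' where z': "z' \<in> EncZ \<beta>" using Z.nonempty assms by blast
  have "z' \<in> dual UNIV (*) {..<n'} QX"
    unfolding dual_def
  proof (intro CollectI conjI ballI)
    show "z' \<in> vecs UNIV {..<n'}" using EZ_vecs assms z' by blast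
    fix v assume "v \<in> QX"
    then obtain c where c: "c \<in> P" "v \<in> EncX c" using X.surj by blast
    have "dotp (*) {..<n'} v z' = 0" using compat'[OF c(1) assms(1) c(2) z'] assms c by simp
    thus "dotp (*) {..<n'} z' v = 0" by (simp add: dotp_comm)
  qed
  thus ?thesis using Z.inW assms z' by blast
qed

end


definition blk :: "(nat \<times> nat \<Rightarrow> 'a) \<Rightarrow> nat \<Rightarrow> (nat \<Rightarrow> 'a)" where
  "blk w j = (\<lambda>i. w (j, i))"

definition cat :: "nat \<Rightarrow> nat \<Rightarrow> ('a::zero poly \<Rightarrow> (nat \<Rightarrow> 'a) set) \<Rightarrow> (nat \<Rightarrow> 'a poly) \<Rightarrow> (nat \<times> nat \<Rightarrow> 'a) set" where
  "cat n n' Ei y = {w \<in> vecs UNIV ({..<n} \<times> {..<n'}). \<forall>j<n. blk w j \<in> Ei (y j)}"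

lemma concat_enc_cat: "concat_enc n n' Ei Eo x = (\<Union>y\<in>Eo x. cat n n' Ei y)"
  by (simp add: concat_enc_def cat_def blk_def)

lemma dotp_blocks: "dotp (*) ({..<n} \<times> {..<n'}) a b = (\<Sum>j<n. dotp (*) {..<n'} (blk a j) (blk b j))"
  unfolding dotp_def blk_def by (simp add: sum.cartesian_product)

lemma wt_blocks: "wt ({..<n} \<times> {..<n'}) w = (\<Sum>j<n. wt {..<n'} (blk w j))"
proof -
  have "{p \<in> {..<n} \<times> {..<n'}. w p \<noteq> 0} = Sigma {..<n} (\<lambda>j. {i \<in> {..<n'}. w (j, i) \<noteq> 0})" by auto
  thus ?thesis unfolding wt_def blk_def by (simp add: card_SigmaI)
qed

lemma blk_vecs: "w \<in> vecs K ({..<n} \<times> {..<n'}) \<Longrightarrow> j < n \<Longrightarrow> 0 \<in> K \<Longrightarrow> blk w j \<in> vecs K {..<n'}"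
  by (auto simp: vecs_def blk_def)

lemma vecsP_comp: "y \<in> vecs K I \<Longrightarrow> 0 \<in> K \<Longrightarrow> y j \<in> K"
  by (cases "j \<in> I") (auto simp: vecs_def)

locale icat = enc UNIV "(*)" W Q smult "polys_lt (degree \<gamma>)" E
  for W Q :: "(nat \<Rightarrow> 'a::{finite,field}) set" and \<gamma> :: "'a poly" and E +
  fixes n n' :: nat
  assumes Evecs: "x \<in> polys_lt (degree \<gamma>) \<Longrightarrow> u \<in> E x \<Longrightarrow> u \<in> vecs UNIV {..<n'}"
    and g0: "\<gamma> \<noteq> 0" and kpos: "degree \<gamma> > 0"
begin

abbreviation "PP \<equiv> polys_lt (degree \<gamma>)"
abbreviation "YV \<equiv> vecs PP {..<n}"
abbreviation "C \<equiv> cat n n' E"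

lemma cat_vecs: "w \<in> C y \<Longrightarrow> w \<in> vecs UNIV ({..<n} \<times> {..<n'})"
  by (simp add: cat_def)

lemma cat_ne: assumes "y \<in> YV" shows "\<exists>w. w \<in> C y"
proof -
  define b where "b j = (SOME u. u \<in> E (y j))" for j
  have b: "b j \<in> E (y j)" for j
    unfolding b_def using nonempty vecsP_comp[OF assms plt_zero] by (metis someI_ex)
  define w where "w = (\<lambda>(j, i). if j < n \<and> i < n' then b j i else 0)"
  have "blk w j = b j" if "j < n" for j
    using that Evecs[OF vecsP_comp[OF assms plt_zero] b[of j]] by (auto simp: blk_def w_def vecs_def fun_eq_iff)
  hence "w \<in> C y" using b by (auto simp: cat_def vecs_def w_def)
  thus ?thesis by blast
qed

lemma cat_add: assumes "y \<in> YV" "y' \<in> YV" "w \<in> C y" "w' \<in> C y'" shows "w + w' \<in> C (y + y')"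
proof -
  have b: "blk (w + w') j = blk w j + blk w' j" for j by (simp add: blk_def fun_eq_iff)
  have "blk (w + w') j \<in> E ((y + y') j)" if "j < n" for j
    using add_mem[OF vecsP_comp[OF assms(1) plt_zero] vecsP_comp[OF assms(2) plt_zero]] assms(3,4) that
    unfolding b cat_def by auto
  moreover have "w + w' \<in> vecs UNIV ({..<n} \<times> {..<n'})"
    using cat_vecs[OF assms(3)] cat_vecs[OF assms(4)] by (simp add: vecs_def)
  ultimately show ?thesis unfolding cat_def by blast
qed

lemma cat_diff: assumes "y \<in> YV" "y' \<in> YV" "w \<in> C y" "w' \<in> C y'" shows "w - w' \<in> C (y - y')"
proof -
  have b: "blk (w - w') j = blk w j - blk w' j" for j by (simp add: blk_def fun_eq_iff)
  have "blk (w - w') j \<in> E ((y - y') j)" if "j < n" for j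
    using diff_mem[OF vecsP_comp[OF assms(1) plt_zero] vecsP_comp[OF assms(2) plt_zero]] assms(3,4) that
    unfolding b cat_def by auto
  moreover have "w - w' \<in> vecs UNIV ({..<n} \<times> {..<n'})"
    using cat_vecs[OF assms(3)] cat_vecs[OF assms(4)] by (simp add: vecs_def)
  ultimately show ?thesis unfolding cat_def by blast
qed

lemma cat_smul: assumes "y \<in> YV" "w \<in> C y" shows "smul (*) c w \<in> C (smul (fmul \<gamma>) [:c:] y)"
proof -
  have "smul (fmul \<gamma>) [:c:] y j = smult c (y j)" for j
    using fmul_const[OF vecsP_comp[OF assms(1) plt_zero]] by (simp add: smul_def)
  moreover have "blk (smul (*) c w) j = smul (*) c (blk w j)" for j by (simp add: blk_def smul_def)
  ultimately show ?thesis using assms scal_mem vecsP_comp[OF assms(1) plt_zero]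
    unfolding cat_def by (auto simp: vecs_def smul_def)
qed

lemma cat_zero: "0 \<in> C 0"
  using E0 grp_zero[OF grpW] by (auto simp: cat_def vecs_def blk_def zero_fun_def)

lemma cat_inj: assumes "y \<in> YV" "y' \<in> YV" "w \<in> C y" "w \<in> C y'" shows "y = y'"
proof
  fix j show "y j = y' j"
  proof (cases "j < n")
    case True thus ?thesis using same[OF vecsP_comp[OF assms(1) plt_zero] vecsP_comp[OF assms(2) plt_zero], of "blk w j"] assms(3,4)
      unfolding cat_def by auto
  next
    case False thus ?thesis using assms by (auto simp: vecs_def)
  qed
qed

lemma cat_coset: assumes "y \<in> YV" "w \<in> C y" shows "C y = (\<lambda>v. w + v) ` C 0"
proof
  have z: "(0::nat \<Rightarrow> 'a poly) \<in> YV" by (simp add: vecs_def)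
  show "C y \<subseteq> (\<lambda>v. w + v) ` C 0"
  proof
    fix u assume "u \<in> C y"
    hence "u - w \<in> C (y - y)" using cat_diff assms by blast
    thus "u \<in> (\<lambda>v. w + v) ` C 0" by (intro image_eqI[of _ _ "u - w"]) auto
  qed
  show "(\<lambda>v. w + v) ` C 0 \<subseteq> C y" using cat_add[OF assms(1) z assms(2)] by auto
qed

end

context inner_code
begin

sublocale CZ: icat "dual UNIV (*) {..<n'} QX" QZ \<gamma> EncZ n n' for n
  by unfold_locales (auto simp: EZ_vecs g0 kpos)

sublocale CX: icat "dual UNIV (*) {..<n'} QZ" QX \<gamma> EncX n n' for n
  by unfold_locales (auto simp: EX_vecs g0 kpos)

lemma cat_dot: assumes "x' \<in> vecs P {..<n}" "z' \<in> vecs P {..<n}"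
  "xt \<in> cat n n' EncX x'" "zt \<in> cat n n' EncZ z'"
  shows "dotp (*) ({..<n} \<times> {..<n'}) xt zt = T (dotp (fmul \<gamma>) {..<n} x' z')"
proof -
  have "dotp (*) ({..<n} \<times> {..<n'}) xt zt = (\<Sum>j<n. dotp (*) {..<n'} (blk xt j) (blk zt j))"
    by (rule dotp_blocks)
  also have "\<dots> = (\<Sum>j<n. T (fmul \<gamma> (x' j) (z' j)))"
  proof (rule sum.cong)
    fix j assume "j \<in> {..<n}"
    hence "blk xt j \<in> EncX (x' j)" "blk zt j \<in> EncZ (z' j)" using assms(3,4) by (auto simp: cat_def)
    thus "dotp (*) {..<n'} (blk xt j) (blk zt j) = T (fmul \<gamma> (x' j) (z' j))"
      using compat'[OF vecsP_comp[OF assms(1) plt_zero] vecsP_comp[OF assms(2) plt_zero]] by metis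
  qed simp
  also have "\<dots> = T (dotp (fmul \<gamma>) {..<n} x' z')"
    unfolding dotp_def using fmul_plt[OF g0] by (intro T_sum[symmetric])
  finally show ?thesis .
qed

end


context inner_code
begin

lemma H:
  fixes n :: nat
  assumes Y: "Y \<subseteq> vecs P {..<n}" "0 \<in> Y" "\<forall>c\<in>P. \<forall>y\<in>Y. smul (fmul \<gamma>) c y \<in> Y"
    and u: "u \<in> dual UNIV (*) ({..<n} \<times> {..<n'}) (\<Union>y\<in>Y. cat n n' EncX y)"
  shows "\<exists>y'\<in>dual P (fmul \<gamma>) {..<n} Y. u \<in> cat n n' EncZ y'"
proof -
  have uv: "u \<in> vecs UNIV ({..<n} \<times> {..<n'})" using u by (auto simp: dual_def)
  have uorth: "\<And>y xt. y \<in> Y \<Longrightarrow> xt \<in> cat n n' EncX y \<Longrightarrow> dotp (*) ({..<n} \<times> {..<n'}) u xt = 0"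
    using u by (auto simp: dual_def)
  have bQZ: "blk u j \<in> QZ" if j: "j < n" for j
  proof (rule double_dual[OF _ QZs])
    show "blk u j \<in> vecs UNIV {..<n'}" using blk_vecs[OF uv j] by simp
    show "\<forall>w\<in>vecs UNIV {..<n'}. (\<forall>v\<in>QZ. dotp (*) {..<n'} w v = 0) \<longrightarrow> dotp (*) {..<n'} (blk u j) w = 0"
    proof (intro ballI impI)
      fix w assume w: "w \<in> vecs UNIV {..<n'}" "\<forall>v\<in>QZ. dotp (*) {..<n'} w v = 0"
      hence wd: "w \<in> EncX 0" using X.E0 by (simp add: dual_def)
      have z0: "(0 :: nat \<Rightarrow> 'a) \<in> EncX 0" using X.E0 grp_zero[OF dual_grp_times] by simp
      define xt where "xt = (\<lambda>(j', i). if j' = j \<and> i < n' then w i else (0::'a))"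
      have bx: "blk xt j' = (if j' = j then w else 0)" for j'
        using w(1) by (auto simp: blk_def xt_def fun_eq_iff vecs_def)
      have "xt \<in> vecs UNIV ({..<n} \<times> {..<n'})" using j by (auto simp: vecs_def xt_def)
      moreover have "\<forall>j'<n. blk xt j' \<in> EncX ((0 :: nat \<Rightarrow> 'a poly) j')" using wd z0 by (simp add: bx)
      ultimately have "xt \<in> cat n n' EncX 0" unfolding cat_def by blast
      hence "dotp (*) ({..<n} \<times> {..<n'}) u xt = 0" using uorth Y(2) by blast
      moreover have "dotp (*) {..<n'} (blk u j') (blk xt j') =
          (if j' = j then dotp (*) {..<n'} (blk u j) w else 0)" for j'
        by (simp add: bx dotp_def)
      ultimately show "dotp (*) {..<n'} (blk u j) w = 0" using j
        unfolding dotp_blocks by simp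
    qed
  qed simp
  define y' where "y' j = (if j < n then (SOME x. x \<in> P \<and> blk u j \<in> EncZ x) else 0)" for j
  have y'P: "y' j \<in> P \<and> blk u j \<in> EncZ (y' j)" if "j < n" for j
  proof -
    have "\<exists>x. x \<in> P \<and> blk u j \<in> EncZ x" using Z.surj bQZ[OF that] by blast
    from someI_ex[OF this] show ?thesis unfolding y'_def using that by simp
  qed
  have y'v: "y' \<in> vecs P {..<n}" using y'P by (auto simp: vecs_def y'_def)
  have ucat: "u \<in> cat n n' EncZ y'" using uv y'P by (auto simp: cat_def)
  have "y' \<in> dual P (fmul \<gamma>) {..<n} Y"
    unfolding dual_def
  proof (intro CollectI conjI ballI)
    show "y' \<in> vecs P {..<n}" by (rule y'v)
    fix x' assume x': "x' \<in> Y"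
    have x'v: "x' \<in> vecs P {..<n}" using Y(1) x' by blast
    define S where "S = dotp (fmul \<gamma>) {..<n} x' y'"
    have SP: "S \<in> P" unfolding S_def dotp_def by (intro plt_sum fmul_plt[OF g0])
    have "\<forall>c\<in>P. T (fmul \<gamma> c S) = 0"
    proof
      fix c :: "'a poly" assume c: "c \<in> P"
      have cx: "smul (fmul \<gamma>) c x' \<in> Y" using Y(3) c x' by blast
      hence cxv: "smul (fmul \<gamma>) c x' \<in> vecs P {..<n}" using Y(1) by blast
      obtain xt where xt: "xt \<in> cat n n' EncX (smul (fmul \<gamma>) c x')" using CX.cat_ne[OF cxv] by blast
      have "dotp (*) ({..<n} \<times> {..<n'}) u xt = 0" using uorth cx xt by blast
      hence "dotp (*) ({..<n} \<times> {..<n'}) xt u = 0" by (simp add: dotp_comm)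
      moreover have "dotp (*) ({..<n} \<times> {..<n'}) xt u = T (dotp (fmul \<gamma>) {..<n} (smul (fmul \<gamma>) c x') y')"
        by (rule cat_dot[OF cxv y'v xt ucat])
      moreover have "dotp (fmul \<gamma>) {..<n} (smul (fmul \<gamma>) c x') y' = fmul \<gamma> c S"
        unfolding S_def dotp_def smul_def by (simp add: fmul_sum_right fmul_assoc)
      ultimately show "T (fmul \<gamma> c S) = 0" by simp
    qed
    hence "S = 0" using ND SP by blast
    thus "dotp (fmul \<gamma>) {..<n} y' x' = 0" unfolding S_def dotp_def by (simp add: fmul_comm)
  qed
  thus ?thesis using ucat by blast
qed

lemma ODD:
  fixes n :: nat
  assumes QXo: "is_subspace P (fmul \<gamma>) {..<n} QXo" and QZo: "is_subspace P (fmul \<gamma>) {..<n} QZo"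
    and d: "dual P (fmul \<gamma>) {..<n} QXo \<subseteq> QZo"
  shows "dual P (fmul \<gamma>) {..<n} QZo \<subseteq> QXo"
proof
  fix w assume w: "w \<in> dual P (fmul \<gamma>) {..<n} QZo"
  have wv: "w \<in> vecs P {..<n}" using w by (auto simp: dual_def)
  define V where "V = (\<Union>y\<in>QXo. cat n n' EncX y)"
  have QXv: "QXo \<subseteq> vecs P {..<n}" using QXo by (auto simp: is_subspace_def)
  have Vs: "is_subspace UNIV (*) ({..<n} \<times> {..<n'}) V"
    unfolding is_subspace_def
  proof (intro conjI ballI allI subsetI)
    show "x \<in> vecs UNIV ({..<n} \<times> {..<n'})" if "x \<in> V" for x
      using that CX.cat_vecs unfolding V_def by blast
    show "0 \<in> V" unfolding V_def using CX.cat_zero subsp_zero[OF QXo] by blast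
    show "u + v \<in> V" if uv: "u \<in> V" "v \<in> V" for u v
    proof -
      obtain y y' where "y \<in> QXo" "u \<in> cat n n' EncX y" "y' \<in> QXo" "v \<in> cat n n' EncX y'"
        using uv unfolding V_def by blast
      thus ?thesis unfolding V_def using CX.cat_add[of y n y' u v] QXv subsp_add[OF QXo] by blast
    qed
    show "smul (*) c v \<in> V" if vV: "v \<in> V" for c v
    proof -
      obtain y where "y \<in> QXo" "v \<in> cat n n' EncX y" using vV unfolding V_def by blast
      thus ?thesis unfolding V_def
        using CX.cat_smul[of y n v c] QXv subsp_smul[OF QXo plt_const[OF kpos]] by blast
    qed
  qed
  obtain xt where xt: "xt \<in> cat n n' EncX w" using CX.cat_ne[OF wv] by blast
  have "xt \<in> V"
  proof (rule double_dual[OF _ Vs])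
    show "xt \<in> vecs UNIV ({..<n} \<times> {..<n'})" using CX.cat_vecs xt by blast
    show "\<forall>v\<in>vecs UNIV ({..<n} \<times> {..<n'}). (\<forall>x\<in>V. dotp (*) ({..<n} \<times> {..<n'}) v x = 0)
        \<longrightarrow> dotp (*) ({..<n} \<times> {..<n'}) xt v = 0"
    proof (intro ballI impI)
      fix v assume v: "v \<in> vecs UNIV ({..<n} \<times> {..<n'})" "\<forall>x\<in>V. dotp (*) ({..<n} \<times> {..<n'}) v x = 0"
      hence "v \<in> dual UNIV (*) ({..<n} \<times> {..<n'}) V" by (simp add: dual_def)
      then obtain y' where y': "y' \<in> dual P (fmul \<gamma>) {..<n} QXo" "v \<in> cat n n' EncZ y'"
        using H[of QXo n v] QXv subsp_zero[OF QXo] subsp_smul[OF QXo] unfolding V_def by blast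
      have y'Z: "y' \<in> QZo" using d y' by blast
      have y'v: "y' \<in> vecs P {..<n}" using y' by (auto simp: dual_def)
      have "dotp (*) ({..<n} \<times> {..<n'}) xt v = T (dotp (fmul \<gamma>) {..<n} w y')"
        using cat_dot[OF wv y'v xt y'(2)] .
      also have "dotp (fmul \<gamma>) {..<n} w y' = 0" using w y'Z by (auto simp: dual_def)
      finally show "dotp (*) ({..<n} \<times> {..<n'}) xt v = 0" using T_zero by simp
    qed
  qed simp
  then obtain y where y: "y \<in> QXo" "xt \<in> cat n n' EncX y" unfolding V_def by blast
  have "w = y" using CX.cat_inj[OF wv _ xt y(2)] QXv y(1) by blast
  thus "w \<in> QXo" using y by simp
qed

end


definition msum :: "nat \<Rightarrow> (nat \<Rightarrow> 'a::comm_monoid_add) \<Rightarrow> 'a poly" where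
  "msum r f = (\<Sum>i<r. monom (f i) i)"

lemma coeff_msum: "coeff (msum r f) i = (if i < r then f i else (0::'a::comm_monoid_add))"
  unfolding msum_def coeff_sum coeff_monom by (simp add: sum.delta')

lemma msum_plt: "msum r f \<in> polys_lt r"
proof (cases "msum r f = 0")
  case False
  have "degree (msum r f) \<le> r - 1" by (rule degree_le) (auto simp: coeff_msum)
  moreover have "r > 0" using False by (cases r) (auto simp: msum_def)
  ultimately have "degree (msum r f) < r" by linarith
  thus ?thesis by (simp add: polys_lt_def)
qed (simp add: polys_lt_def)

lemma polys_lt_img: "polys_lt r = msum r ` vecs (UNIV::'a::comm_monoid_add set) {..<r}"
proof
  show "msum r ` vecs UNIV {..<r} \<subseteq> polys_lt r" using msum_plt by blast
  show "polys_lt r \<subseteq> msum r ` vecs (UNIV::'a set) {..<r}"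
  proof
    fix p :: "'a poly" assume p: "p \<in> polys_lt r"
    have "p = msum r (\<lambda>i. if i < r then coeff p i else 0)"
    proof (rule poly_eqI)
      fix i show "coeff p i = coeff (msum r (\<lambda>i. if i < r then coeff p i else 0)) i"
        using p by (cases "p = 0"; cases "i < r") (auto simp: coeff_msum polys_lt_def coeff_eq_0)
    qed
    moreover have "(\<lambda>i. if i < r then coeff p i else 0) \<in> vecs UNIV {..<r}" by (simp add: vecs_def)
    ultimately show "p \<in> msum r ` vecs UNIV {..<r}" by blast
  qed
qed

lemma msum_inj: "inj_on (msum r) (vecs (UNIV::'a::comm_monoid_add set) {..<r})"
proof (rule inj_onI)
  fix f g :: "nat \<Rightarrow> 'a" assume fg: "f \<in> vecs UNIV {..<r}" "g \<in> vecs UNIV {..<r}" "msum r f = msum r g"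
  show "f = g"
  proof
    fix i
    have "coeff (msum r f) i = coeff (msum r g) i" using fg by simp
    thus "f i = g i" using fg(1,2) by (cases "i < r") (auto simp: coeff_msum vecs_def)
  qed
qed

lemma card_plt: "card (polys_lt r :: 'a::{finite,comm_monoid_add} poly set) = card (UNIV::'a set) ^ r"
  "finite (polys_lt r :: 'a::{finite,comm_monoid_add} poly set)"
proof -
  show "card (polys_lt r :: 'a poly set) = card (UNIV::'a set) ^ r"
    unfolding polys_lt_img by (simp add: card_image[OF msum_inj] card_vecs)
  show "finite (polys_lt r :: 'a poly set)" unfolding polys_lt_img by (simp add: vecs_finite)
qed

lemma interp_unique:
  fixes A :: "'a::{finite,field} set"
  assumes "card A = r" "p \<in> polys_lt r" "q \<in> polys_lt r" "\<forall>a\<in>A. poly p a = poly q a"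
  shows "p = q"
proof (rule ccontr)
  assume ne: "p \<noteq> q"
  have d: "p - q \<in> polys_lt r" using plt_diff assms by blast
  hence dg: "degree (p - q) < r" using ne by (simp add: polys_lt_def)
  have "A \<subseteq> {x. poly (p - q) x = 0}" using assms(4) by auto
  hence "card A \<le> card {x. poly (p - q) x = 0}" by (intro card_mono) simp_all
  also have "\<dots> \<le> degree (p - q)" using ne by (intro card_poly_roots_bound) simp
  finally show False using dg assms(1) by simp
qed

definition evA :: "'a set \<Rightarrow> 'a::comm_ring_1 poly \<Rightarrow> ('a \<Rightarrow> 'a)" where
  "evA A p = (\<lambda>a. if a \<in> A then poly p a else 0)"

lemma interp_exists:
  fixes A :: "'a::{finite,field} set"
  assumes "card A = r" "f \<in> vecs UNIV A"
  shows "\<exists>p\<in>polys_lt r. \<forall>a\<in>A. poly p a = f a"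
proof -
  have inj: "inj_on (evA A) (polys_lt r)"
  proof (rule inj_onI)
    fix p q assume "p \<in> polys_lt r" "q \<in> polys_lt r" "evA A p = evA A q"
    thus "p = q" using interp_unique[OF assms(1)] by (metis evA_def)
  qed
  have sub: "evA A ` polys_lt r \<subseteq> vecs UNIV A" by (auto simp: evA_def vecs_def)
  have c1: "card (polys_lt r :: 'a poly set) = card (UNIV::'a set)^r" by (rule card_plt(1))
  have "card (evA A ` polys_lt r) = card (vecs (UNIV::'a set) A)"
  proof -
    have "card (vecs (UNIV::'a set) A) = card (UNIV::'a set)^card A" by (rule card_vecs) simp
    thus ?thesis using card_image[OF inj] c1 assms(1) by simp
  qed
  hence "evA A ` polys_lt r = vecs UNIV A"
    using sub by (intro card_subset_eq) (simp_all add: vecs_finite)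
  then obtain p where "p \<in> polys_lt r" "evA A p = f" using assms(2) by (metis imageE)
  thus ?thesis by (auto simp: evA_def)
qed


locale ccat = icat W Q \<gamma> E n n' + O: enc "polys_lt (degree \<gamma>)" "fmul \<gamma>" Wo Qo "smul (fmul \<gamma>)" "vecs (polys_lt (degree \<gamma>)) {..<k}" Eo
  for W Q and \<gamma> :: "'a::{finite,field} poly" and E n n' Wo Qo Eo k +
  assumes Eo_vecs: "x \<in> vecs (polys_lt (degree \<gamma>)) {..<k} \<Longrightarrow> y \<in> Eo x \<Longrightarrow> y \<in> vecs (polys_lt (degree \<gamma>)) {..<n}"
begin

abbreviation "DX \<equiv> vecs PP {..<k}"
abbreviation "CE \<equiv> concat_enc n n' E Eo"

lemma CE_mem: "u \<in> CE x \<longleftrightarrow> (\<exists>y\<in>Eo x. u \<in> C y)"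
  by (simp add: concat_enc_cat)

lemma CE_vecs: "u \<in> CE x \<Longrightarrow> u \<in> vecs UNIV ({..<n} \<times> {..<n'})"
  using CE_mem cat_vecs by blast

lemma CE_ne: assumes "x \<in> DX" shows "\<exists>u. u \<in> CE x"
proof -
  obtain y where y: "y \<in> Eo x" using O.nonempty assms by blast
  obtain u where "u \<in> C y" using cat_ne Eo_vecs[OF assms y] by blast
  thus ?thesis using y CE_mem by blast
qed

lemma CE_add: assumes "x \<in> DX" "x' \<in> DX" "u \<in> CE x" "v \<in> CE x'" shows "u + v \<in> CE (x + x')"
proof -
  obtain y y' where y: "y \<in> Eo x" "u \<in> C y" "y' \<in> Eo x'" "v \<in> C y'" using assms CE_mem by blast
  have "y + y' \<in> Eo (x + x')" using O.add_mem assms y by blast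
  moreover have "u + v \<in> C (y + y')" using cat_add Eo_vecs assms y by blast
  ultimately show ?thesis using CE_mem by blast
qed

lemma CE_diff: assumes "x \<in> DX" "x' \<in> DX" "u \<in> CE x" "v \<in> CE x'" shows "u - v \<in> CE (x - x')"
proof -
  obtain y y' where y: "y \<in> Eo x" "u \<in> C y" "y' \<in> Eo x'" "v \<in> C y'" using assms CE_mem by blast
  have "y - y' \<in> Eo (x - x')" using O.diff_mem assms y by blast
  moreover have "u - v \<in> C (y - y')" using cat_diff Eo_vecs assms y by blast
  ultimately show ?thesis using CE_mem by blast
qed

lemma CE_smul: assumes "x \<in> DX" "u \<in> CE x" shows "smul (*) c u \<in> CE (smul (fmul \<gamma>) [:c:] x)"
proof -
  obtain y where y: "y \<in> Eo x" "u \<in> C y" using assms CE_mem by blast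
  have "smul (fmul \<gamma>) [:c:] y \<in> Eo (smul (fmul \<gamma>) [:c:] x)" using O.scal_mem assms y plt_const[OF kpos] by blast
  moreover have "smul (*) c u \<in> C (smul (fmul \<gamma>) [:c:] y)" using cat_smul Eo_vecs assms y by blast
  ultimately show ?thesis using CE_mem by blast
qed

lemma CE_zero: "0 \<in> CE 0"
  using O.E0 grp_zero[OF O.grpW] cat_zero CE_mem by blast

lemma CE_inj: assumes "x \<in> DX" "x' \<in> DX" "u \<in> CE x" "u \<in> CE x'" shows "x = x'"
proof -
  obtain y y' where y: "y \<in> Eo x" "u \<in> C y" "y' \<in> Eo x'" "u \<in> C y'" using assms CE_mem by blast
  have yv: "y \<in> YV" "y' \<in> YV" using Eo_vecs assms y by auto
  have "y = y'" using cat_inj[OF yv y(2,4)] .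
  thus ?thesis using O.same assms y by blast
qed

lemma CE0: "CE 0 = (\<Union>y\<in>Wo. C y)"
  using O.E0 by (simp add: concat_enc_cat)

lemma CE_coset: assumes "x \<in> DX" "u \<in> CE x" shows "CE x = (\<lambda>v. u + v) ` CE 0"
proof
  have z: "0 \<in> DX" by (simp add: vecs_def)
  show "CE x \<subseteq> (\<lambda>v. u + v) ` CE 0"
  proof
    fix v assume "v \<in> CE x"
    hence "v - u \<in> CE (x - x)" using CE_diff assms by blast
    thus "v \<in> (\<lambda>v. u + v) ` CE 0" by (intro image_eqI[of _ _ "v - u"]) auto
  qed
  show "(\<lambda>v. u + v) ` CE 0 \<subseteq> CE x" using CE_add[OF assms(1) z assms(2)] by auto
qed

end


lemma dual_subspace: "is_subspace UNIV (*) I (dual UNIV (*) I (V::('i\<Rightarrow>'a::field) set))"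
  unfolding is_subspace_def
proof (intro conjI ballI allI)
  show "dual UNIV (*) I V \<subseteq> vecs UNIV I" by (rule dual_sub)
  show "0 \<in> dual UNIV (*) I V" by (simp add: dual_def dotp_def vecs_def)
  fix u v assume u: "u \<in> dual UNIV (*) I V" and v: "v \<in> dual UNIV (*) I V"
  thus "u + v \<in> dual UNIV (*) I V" using grp_add[OF dual_grp_times] by blast
next
  fix c and v :: "'i \<Rightarrow> 'a" assume v: "v \<in> dual UNIV (*) I V"
  have "dotp (*) I (smul (*) c v) w = c * dotp (*) I v w" for w
    unfolding dotp_def smul_def by (simp add: sum_distrib_left mult.assoc)
  thus "smul (*) c v \<in> dual UNIV (*) I V" using v by (auto simp: dual_def vecs_def smul_def)
qed

lemma dual_anti: "V \<subseteq> V' \<Longrightarrow> dual K mul I V' \<subseteq> dual K mul I V"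
  by (auto simp: dual_def)

lemma vecs_diff_plt: "x \<in> vecs (polys_lt m) J \<Longrightarrow> y \<in> vecs (polys_lt m) J \<Longrightarrow> x - y \<in> vecs (polys_lt m) J"
  for x y :: "'j \<Rightarrow> 'a::field poly"
  by (auto simp: vecs_def intro: plt_diff)

lemma vecs_add_plt: "x \<in> vecs (polys_lt m) J \<Longrightarrow> y \<in> vecs (polys_lt m) J \<Longrightarrow> x + y \<in> vecs (polys_lt m) J"
  for x y :: "'j \<Rightarrow> 'a::field poly"
  by (auto simp: vecs_def intro: plt_add)

context enc
begin

lemma card_Q: assumes "finite Dom" "finite W" "W \<subseteq> Q" "grp Q" shows "card Q = card Dom * card W"
proof -
  have Q: "Q = (\<Union>x\<in>Dom. E x)" using surj sub_Q[OF assms(3,4)] by blast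
  have cE: "card (E x) = card W \<and> finite (E x)" if x: "x \<in> Dom" for x
  proof -
    obtain u where "u \<in> E x" using nonempty x by blast
    hence "E x = (\<lambda>w. u + w) ` W" using coset x by blast
    moreover have "inj_on (\<lambda>w. u + w) W" by (simp add: inj_on_def)
    ultimately show ?thesis using assms(2) by (simp add: card_image)
  qed
  have "card (\<Union>x\<in>Dom. E x) = (\<Sum>x\<in>Dom. card (E x))"
  proof (rule card_UN_disjoint)
    show "\<forall>i\<in>Dom. \<forall>j\<in>Dom. i \<noteq> j \<longrightarrow> E i \<inter> E j = {}" using same by blast
  qed (use assms cE in auto)
  also have "\<dots> = card Dom * card W" using cE by simp
  finally show ?thesis using Q by simp
qed

end

lemma wt_bound:
  fixes y :: "nat \<times> nat \<Rightarrow> 'a::zero" and y' :: "nat \<Rightarrow> 'b::zero"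
  assumes "\<And>j. j < n \<Longrightarrow> y' j \<noteq> 0 \<Longrightarrow> di \<le> wt {..<n'} (blk y j)" "dout \<le> wt {..<n} y'"
  shows "di * dout \<le> wt ({..<n} \<times> {..<n'}) y"
proof -
  define S where "S = {j \<in> {..<n}. y' j \<noteq> 0}"
  have "di * dout \<le> di * card S" using assms(2) by (simp add: wt_def S_def)
  also have "\<dots> = (\<Sum>j\<in>S. di)" by simp
  also have "\<dots> \<le> (\<Sum>j\<in>S. wt {..<n'} (blk y j))" using assms(1) by (intro sum_mono) (auto simp: S_def)
  also have "\<dots> \<le> (\<Sum>j<n. wt {..<n'} (blk y j))" by (intro sum_mono2) (auto simp: S_def)
  also have "\<dots> = wt ({..<n} \<times> {..<n'}) y" by (simp add: wt_blocks)
  finally show ?thesis .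
qed


locale conc = inner_code \<gamma> n' QX QZ EncZ EncX
  for \<gamma> :: "'a::{finite,field} poly" and n' QX QZ EncZ EncX +
  fixes n k r :: nat and A :: "'a set" and QXo QZo :: "(nat \<Rightarrow> 'a poly) set"
    and EZo EXo :: "(nat \<Rightarrow> 'a poly) \<Rightarrow> (nat \<Rightarrow> 'a poly) set" and di dout :: nat
  assumes ocss: "is_css (polys_lt (degree \<gamma>)) (fmul \<gamma>) {..<n} QXo QZo"
    and encZo: "is_enc (polys_lt (degree \<gamma>)) (fmul \<gamma>) (dual (polys_lt (degree \<gamma>)) (fmul \<gamma>) {..<n} QXo) QZo
             (smul (fmul \<gamma>)) (vecs (polys_lt (degree \<gamma>)) {..<k}) EZo"
    and encXo: "is_enc (polys_lt (degree \<gamma>)) (fmul \<gamma>) (dual (polys_lt (degree \<gamma>)) (fmul \<gamma>) {..<n} QZo) QXo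
             (smul (fmul \<gamma>)) (vecs (polys_lt (degree \<gamma>)) {..<k}) EXo"
    and compato: "compatible (dotp (fmul \<gamma>) {..<k}) (fmul \<gamma>) {..<n} (vecs (polys_lt (degree \<gamma>)) {..<k}) EXo EZo"
    and idist: "css_dist UNIV (*) {..<n'} QX QZ di"
    and odist: "css_dist (polys_lt (degree \<gamma>)) (fmul \<gamma>) {..<n} QXo QZo dout"
    and r_le: "r \<le> degree \<gamma>" and cardA: "card A = r"
begin

lemma QXos: "is_subspace P (fmul \<gamma>) {..<n} QXo" using ocss by (simp add: is_css_def)
lemma QZos: "is_subspace P (fmul \<gamma>) {..<n} QZo" using ocss by (simp add: is_css_def)
lemma dXZo: "dual P (fmul \<gamma>) {..<n} QXo \<subseteq> QZo" using ocss by (simp add: is_css_def)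
lemma dZXo: "dual P (fmul \<gamma>) {..<n} QZo \<subseteq> QXo" using ODD[OF QXos QZos dXZo] .

sublocale OZ: enc P "fmul \<gamma>" "dual P (fmul \<gamma>) {..<n} QXo" QZo "smul (fmul \<gamma>)" "vecs P {..<k}" EZo
  by unfold_locales (auto simp: encZo dual_grp_fmul vecs_diff_plt, simp add: vecs_def)

sublocale OX: enc P "fmul \<gamma>" "dual P (fmul \<gamma>) {..<n} QZo" QXo "smul (fmul \<gamma>)" "vecs P {..<k}" EXo
  by unfold_locales (auto simp: encXo dual_grp_fmul vecs_diff_plt, simp add: vecs_def)

lemma EZo_sub: "x \<in> vecs P {..<k} \<Longrightarrow> EZo x \<subseteq> QZo"
  using OZ.sub_Q[OF dXZo subsp_grp_fmul[OF QZos kpos]] .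
lemma EXo_sub: "x \<in> vecs P {..<k} \<Longrightarrow> EXo x \<subseteq> QXo"
  using OX.sub_Q[OF dZXo subsp_grp_fmul[OF QXos kpos]] .

sublocale ZC: ccat "dual UNIV (*) {..<n'} QX" QZ \<gamma> EncZ n n' "dual P (fmul \<gamma>) {..<n} QXo" QZo EZo k
proof -
  show "ccat (dual UNIV (*) {..<n'} QX) QZ \<gamma> EncZ n n' (dual P (fmul \<gamma>) {..<n} QXo) QZo EZo k"
    unfolding ccat_def ccat_axioms_def
    using CZ.icat_axioms OZ.enc_axioms EZo_sub QZos subsp_vecs by blast
qed

sublocale XC: ccat "dual UNIV (*) {..<n'} QZ" QX \<gamma> EncX n n' "dual P (fmul \<gamma>) {..<n} QZo" QXo EXo k
proof -
  show "ccat (dual UNIV (*) {..<n'} QZ) QX \<gamma> EncX n n' (dual P (fmul \<gamma>) {..<n} QZo) QXo EXo k"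
    unfolding ccat_def ccat_axioms_def
    using CX.icat_axioms OX.enc_axioms EXo_sub QXos subsp_vecs by blast
qed

abbreviation "II \<equiv> {..<n} \<times> {..<n'}"
abbreviation "DZ \<equiv> vecs (polys_lt r) {..<k}"
abbreviation "QXt \<equiv> space_of (vecs P {..<k}) (concat_enc n n' EncX EXo)"
abbreviation "QZt \<equiv> space_of DZ (concat_enc n n' EncZ EZo)"

lemma DZ_DX: "s \<in> DZ \<Longrightarrow> s \<in> vecs P {..<k}"
  using r_le by (auto simp: vecs_def intro: plt_mono)

lemma DZ_smul: assumes "s \<in> DZ" shows "smul (fmul \<gamma>) [:c:] s \<in> DZ"
proof -
  have "smul (fmul \<gamma>) [:c:] s j = smult c (s j)" for j
    using fmul_const[OF vecsP_comp[OF DZ_DX[OF assms] plt_zero]] by (simp add: smul_def)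
  thus ?thesis using assms by (auto simp: vecs_def intro: plt_smult)
qed

lemma dot_CE: assumes "m \<in> vecs P {..<k}" "s \<in> vecs P {..<k}"
  "xt \<in> concat_enc n n' EncX EXo m" "zt \<in> concat_enc n n' EncZ EZo s"
  shows "dotp (*) II xt zt = T (dotp (fmul \<gamma>) {..<k} m s)"
proof -
  obtain x' where x': "x' \<in> EXo m" "xt \<in> cat n n' EncX x'" using assms XC.CE_mem by blast
  obtain z' where z': "z' \<in> EZo s" "zt \<in> cat n n' EncZ z'" using assms ZC.CE_mem by blast
  have "dotp (*) II xt zt = T (dotp (fmul \<gamma>) {..<n} x' z')"
    using cat_dot XC.Eo_vecs ZC.Eo_vecs assms x' z' by blast
  also have "dotp (fmul \<gamma>) {..<n} x' z' = dotp (fmul \<gamma>) {..<k} m s"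
    using compato assms x' z' unfolding compatible_def by metis
  finally show ?thesis .
qed

lemma dotp_fmul_zero: "dotp (fmul \<gamma>) J 0 s = 0" "dotp (fmul \<gamma>) J s 0 = 0"
  by (simp_all add: dotp_def)

lemma QXt_mem: "u \<in> QXt \<longleftrightarrow> (\<exists>m\<in>vecs P {..<k}. u \<in> concat_enc n n' EncX EXo m)"
  by (simp add: space_of_def)
lemma QZt_mem: "u \<in> QZt \<longleftrightarrow> (\<exists>s\<in>DZ. u \<in> concat_enc n n' EncZ EZo s)"
  by (simp add: space_of_def)

lemma dual_QXt: "dual UNIV (*) II QXt = concat_enc n n' EncZ EZo 0"
proof
  show "concat_enc n n' EncZ EZo 0 \<subseteq> dual UNIV (*) II QXt"
  proof
    fix z assume z: "z \<in> concat_enc n n' EncZ EZo 0"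
    have "\<forall>x\<in>QXt. dotp (*) II z x = 0"
    proof
      fix x assume "x \<in> QXt"
      then obtain m where m: "m \<in> vecs P {..<k}" "x \<in> concat_enc n n' EncX EXo m" using QXt_mem by blast
      have "dotp (fmul \<gamma>) {..<k} m 0 = 0" by (simp add: dotp_def)
      moreover have "(0::nat \<Rightarrow> 'a poly) \<in> vecs P {..<k}" by (simp add: vecs_def)
      ultimately have "dotp (*) II x z = 0" using dot_CE[OF m(1) _ m(2) z] T_zero by simp
      thus "dotp (*) II z x = 0" by (simp add: dotp_comm)
    qed
    thus "z \<in> dual UNIV (*) II QXt" using ZC.CE_vecs z by (simp add: dual_def)
  qed
  show "dual UNIV (*) II QXt \<subseteq> concat_enc n n' EncZ EZo 0"
  proof
    fix u assume u: "u \<in> dual UNIV (*) II QXt"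
    define Y where "Y = (\<Union>m\<in>vecs P {..<k}. EXo m)"
    have Yv: "Y \<subseteq> vecs P {..<n}" using XC.Eo_vecs unfolding Y_def by blast
    have z: "(0::nat \<Rightarrow> 'a poly) \<in> vecs P {..<k}" by (simp add: vecs_def)
    have "(0::nat \<Rightarrow> 'a poly) \<in> EXo 0" using OX.E0 grp_zero[OF OX.grpW] by simp
    hence Y0: "0 \<in> Y" unfolding Y_def using z by blast
    have Ys: "\<forall>c\<in>P. \<forall>y\<in>Y. smul (fmul \<gamma>) c y \<in> Y"
    proof (intro ballI)
      fix c :: "'a poly" and y assume c: "c \<in> P" and y: "y \<in> Y"
      then obtain m where m: "m \<in> vecs P {..<k}" "y \<in> EXo m" unfolding Y_def by blast
      have "smul (fmul \<gamma>) c m \<in> vecs P {..<k}" using m(1) fmul_plt[OF g0]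
        by (auto simp: vecs_def smul_def)
      thus "smul (fmul \<gamma>) c y \<in> Y" using OX.scal_mem[OF c m] unfolding Y_def by blast
    qed
    have QXtY: "QXt = (\<Union>y\<in>Y. cat n n' EncX y)"
      unfolding Y_def space_of_def concat_enc_cat by blast
    have "u \<in> dual UNIV (*) II (\<Union>y\<in>Y. cat n n' EncX y)" using u QXtY by simp
    from H[OF Yv Y0 Ys this] obtain y' where y': "y' \<in> dual P (fmul \<gamma>) {..<n} Y" "u \<in> cat n n' EncZ y'"
      by blast
    have "QXo \<subseteq> Y" unfolding Y_def using OX.surj by blast
    hence "y' \<in> dual P (fmul \<gamma>) {..<n} QXo" using y'(1) dual_anti by blast
    hence "y' \<in> EZo 0" using OZ.E0 by simp
    thus "u \<in> concat_enc n n' EncZ EZo 0" using y'(2) ZC.CE_mem by blast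
  qed
qed

lemma QZt_sub: "is_subspace UNIV (*) II QZt"
  unfolding is_subspace_def
proof (intro conjI ballI allI subsetI)
  show "x \<in> vecs UNIV II" if "x \<in> QZt" for x using that QZt_mem ZC.CE_vecs by blast
  have "(0::nat \<Rightarrow> 'a poly) \<in> DZ" by (simp add: vecs_def)
  thus "0 \<in> QZt" using ZC.CE_zero QZt_mem by blast
  show "u + v \<in> QZt" if uv: "u \<in> QZt" "v \<in> QZt" for u v
  proof -
    obtain s s' where s: "s \<in> DZ" "u \<in> concat_enc n n' EncZ EZo s" "s' \<in> DZ" "v \<in> concat_enc n n' EncZ EZo s'"
      using uv QZt_mem by blast
    have "u + v \<in> concat_enc n n' EncZ EZo (s + s')" using ZC.CE_add[OF DZ_DX[OF s(1)] DZ_DX[OF s(3)] s(2,4)] .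
    moreover have "s + s' \<in> DZ" using vecs_add_plt s by blast
    ultimately show ?thesis using QZt_mem by blast
  qed
  show "smul (*) c v \<in> QZt" if vv: "v \<in> QZt" for c v
  proof -
    obtain s where s: "s \<in> DZ" "v \<in> concat_enc n n' EncZ EZo s" using vv QZt_mem by blast
    thus ?thesis using ZC.CE_smul[OF DZ_DX[OF s(1)] s(2)] QZt_mem DZ_smul[OF s(1)] by blast
  qed
qed

lemma QXt_sub: "is_subspace UNIV (*) II QXt"
  unfolding is_subspace_def
proof (intro conjI ballI allI subsetI)
  show "x \<in> vecs UNIV II" if "x \<in> QXt" for x using that QXt_mem XC.CE_vecs by blast
  have "(0::nat \<Rightarrow> 'a poly) \<in> vecs P {..<k}" by (simp add: vecs_def)
  thus "0 \<in> QXt" using XC.CE_zero QXt_mem by blast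
  show "u + v \<in> QXt" if uv: "u \<in> QXt" "v \<in> QXt" for u v
  proof -
    obtain s s' where s: "s \<in> vecs P {..<k}" "u \<in> concat_enc n n' EncX EXo s"
      "s' \<in> vecs P {..<k}" "v \<in> concat_enc n n' EncX EXo s'"
      using uv QXt_mem by blast
    have "u + v \<in> concat_enc n n' EncX EXo (s + s')" using XC.CE_add[OF s(1) s(3) s(2,4)] .
    moreover have "s + s' \<in> vecs P {..<k}" using vecs_add_plt s by blast
    ultimately show ?thesis using QXt_mem by blast
  qed
  show "smul (*) c v \<in> QXt" if vv: "v \<in> QXt" for c v
  proof -
    obtain s where s: "s \<in> vecs P {..<k}" "v \<in> concat_enc n n' EncX EXo s" using vv QXt_mem by blast
    have "smul (fmul \<gamma>) [:c:] s \<in> vecs P {..<k}" using s(1) fmul_plt[OF g0] by (auto simp: vecs_def smul_def)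
    thus ?thesis using XC.CE_smul s QXt_mem by blast
  qed
qed

lemma dual_QXt_sub: "dual UNIV (*) II QXt \<subseteq> QZt"
proof -
  have "(0::nat \<Rightarrow> 'a poly) \<in> DZ" by (simp add: vecs_def)
  thus ?thesis unfolding dual_QXt using QZt_mem by blast
qed

lemma is_css_t: "is_css UNIV (*) II QXt QZt"
  unfolding is_css_def using QXt_sub QZt_sub dual_QXt_sub by blast

end


lemma ev_inv_ex:
  fixes A :: "'a::{finite,field} set"
  assumes "card A = r" "z \<in> vecs UNIV ({..<k} \<times> A)"
  shows "\<exists>s. s \<in> ev_inv k r A z"
proof -
  have ex: "\<exists>p. p \<in> polys_lt r \<and> (\<forall>a\<in>A. poly p a = z (j, a))" if "j < k" for j
  proof -
    have "(\<lambda>a. z (j, a)) \<in> vecs UNIV A" using assms(2) that by (auto simp: vecs_def)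
    from interp_exists[OF assms(1) this] show ?thesis by blast
  qed
  define s where "s j = (if j < k then (SOME p. p \<in> polys_lt r \<and> (\<forall>a\<in>A. poly p a = z (j, a))) else 0)" for j
  have "s j \<in> polys_lt r \<and> (\<forall>a\<in>A. poly (s j) a = z (j, a))" if "j < k" for j
    using someI_ex[OF ex[OF that]] that by (simp add: s_def)
  hence "s \<in> ev_inv k r A z" by (auto simp: ev_inv_def vecs_def s_def)
  thus ?thesis by blast
qed

lemma ev_inv_DZ: "s \<in> ev_inv k r A z \<Longrightarrow> s \<in> vecs (polys_lt r) {..<k}"
  by (simp add: ev_inv_def)

lemma ev_inv_uniq:
  fixes A :: "'a::{finite,field} set"
  assumes "card A = r" "s \<in> ev_inv k r A z" "s' \<in> ev_inv k r A z" shows "s = s'"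
proof
  fix j show "s j = s' j"
  proof (cases "j < k")
    case True thus ?thesis using assms interp_unique[OF assms(1), of "s j" "s' j"]
      by (auto simp: ev_inv_def vecs_def)
  next
    case False thus ?thesis using assms by (auto simp: ev_inv_def vecs_def)
  qed
qed

lemma ev_inv_add:
  fixes A :: "'a::{finite,field} set"
  shows "s \<in> ev_inv k r A z \<Longrightarrow> s' \<in> ev_inv k r A z' \<Longrightarrow> s + s' \<in> ev_inv k r A (z + z')"
  by (auto simp: ev_inv_def vecs_def intro: plt_add)

lemma ev_inv_smul:
  fixes A :: "'a::{finite,field} set"
  assumes "s \<in> ev_inv k r A z" "r \<le> degree \<gamma>"
  shows "smul (fmul \<gamma>) [:c:] s \<in> ev_inv k r A (smul (*) c z)"
proof -
  have sj: "s j \<in> polys_lt r" for j using assms(1) vecsP_comp[of s] by (auto simp: ev_inv_def)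
  have "smul (fmul \<gamma>) [:c:] s j = smult c (s j)" for j
    using fmul_const[OF plt_mono[OF sj assms(2)]] by (simp add: smul_def)
  thus ?thesis using assms(1) sj by (auto simp: ev_inv_def vecs_def smul_def intro: plt_smult)
qed

definition evz :: "nat \<Rightarrow> 'a set \<Rightarrow> (nat \<Rightarrow> 'a::comm_ring_1 poly) \<Rightarrow> (nat \<times> 'a \<Rightarrow> 'a)" where
  "evz k A s = (\<lambda>(j, a). if j < k \<and> a \<in> A then poly (s j) a else 0)"

lemma evz_props: "s \<in> vecs (polys_lt r) {..<k} \<Longrightarrow> s \<in> ev_inv k r A (evz k A s) \<and> evz k A s \<in> vecs UNIV ({..<k} \<times> A)"
  by (auto simp: ev_inv_def evz_def vecs_def)

lemma ev_inv_inj: assumes "s \<in> ev_inv k r A z" "s \<in> ev_inv k r A z'"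
  "z \<in> vecs UNIV ({..<k} \<times> A)" "z' \<in> vecs UNIV ({..<k} \<times> A)" shows "z = z'"
proof
  fix p show "z p = z' p"
  proof (cases p)
    case (Pair j a)
    show ?thesis
    proof (cases "j < k \<and> a \<in> A")
      case True thus ?thesis using assms Pair by (auto simp: ev_inv_def)
    next
      case False thus ?thesis using assms Pair by (auto simp: vecs_def)
    qed
  qed
qed


context conc
begin

abbreviation "Dom \<equiv> vecs (UNIV::'a set) ({..<k} \<times> A)"
abbreviation "Et \<equiv> (\<lambda>z. space_of (ev_inv k r A z) (concat_enc n n' EncZ EZo))"

lemma Et_eq: assumes "s \<in> ev_inv k r A z" shows "Et z = concat_enc n n' EncZ EZo s"
proof -
  have "ev_inv k r A z = {s}" using assms ev_inv_uniq[OF cardA] by blast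
  thus ?thesis by (simp add: space_of_def)
qed

lemma enc_t: "is_enc UNIV (*) (dual UNIV (*) II QXt) QZt (smul (*)) Dom Et"
  unfolding is_enc_def
proof (intro conjI ballI)
  fix z assume z: "z \<in> Dom"
  obtain s where s: "s \<in> ev_inv k r A z" using ev_inv_ex[OF cardA z] by blast
  have sD: "s \<in> DZ" using ev_inv_DZ[OF s] .
  obtain v where v: "v \<in> concat_enc n n' EncZ EZo s" using ZC.CE_ne[OF DZ_DX[OF sD]] by blast
  have "v \<in> QZt" using v sD QZt_mem by blast
  moreover have "Et z = (\<lambda>w. v + w) ` dual UNIV (*) II QXt"
    unfolding Et_eq[OF s] dual_QXt using ZC.CE_coset[OF DZ_DX[OF sD] v] .
  ultimately show "\<exists>v\<in>QZt. Et z = (\<lambda>w. v + w) ` dual UNIV (*) II QXt" by blast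
next
  fix x y u v assume x: "x \<in> Dom" and y: "y \<in> Dom" and u: "u \<in> Et x" and v: "v \<in> Et y"
  obtain s where s: "s \<in> ev_inv k r A x" using ev_inv_ex[OF cardA x] by blast
  obtain s' where s': "s' \<in> ev_inv k r A y" using ev_inv_ex[OF cardA y] by blast
  show "u + v \<in> Et (x + y)"
    using u v unfolding Et_eq[OF s] Et_eq[OF s'] Et_eq[OF ev_inv_add[OF s s']]
    using ZC.CE_add DZ_DX ev_inv_DZ s s' by blast
next
  fix c :: 'a and x u assume x: "x \<in> Dom" and u: "u \<in> Et x"
  obtain s where s: "s \<in> ev_inv k r A x" using ev_inv_ex[OF cardA x] by blast
  show "smul (*) c u \<in> Et (smul (*) c x)"
    using u unfolding Et_eq[OF s] Et_eq[OF ev_inv_smul[OF s r_le]]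
    using ZC.CE_smul DZ_DX ev_inv_DZ s by blast
next
  show "inj_on Et Dom"
  proof (rule inj_onI)
    fix x y assume x: "x \<in> Dom" and y: "y \<in> Dom" and e: "Et x = Et y"
    obtain s where s: "s \<in> ev_inv k r A x" using ev_inv_ex[OF cardA x] by blast
    obtain s' where s': "s' \<in> ev_inv k r A y" using ev_inv_ex[OF cardA y] by blast
    obtain u where u: "u \<in> concat_enc n n' EncZ EZo s" using ZC.CE_ne DZ_DX ev_inv_DZ s by blast
    have "u \<in> concat_enc n n' EncZ EZo s'" using u e Et_eq s s' by simp
    hence "s = s'" using ZC.CE_inj DZ_DX ev_inv_DZ s s' u by blast
    thus "x = y" using ev_inv_inj s s' x y by blast
  qed
next
  fix v assume "v \<in> QZt"
  then obtain s where s: "s \<in> DZ" "v \<in> concat_enc n n' EncZ EZo s" using QZt_mem by blast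
  have "s \<in> ev_inv k r A (evz k A s)" "evz k A s \<in> Dom" using evz_props[OF s(1)] by auto
  thus "\<exists>x\<in>Dom. v \<in> Et x" using Et_eq s(2) by blast
qed

sublocale ET: enc UNIV "(*)" "dual UNIV (*) II QXt" QZt "smul (*)" Dom Et
  apply (unfold enc_def)
  apply (intro conjI allI impI enc_t dual_grp_times)
  apply (auto simp: vecs_def)
  done

lemma dim_t: "css_dim UNIV (*) II QXt QZt (r * k)"
proof -
  have fI: "finite II" by simp
  obtain b where b: "has_dim UNIV (*) (dual UNIV (*) II QXt) b"
    using exists_dim[OF dual_subspace fI] by blast
  obtain a where a: "has_dim UNIV (*) QZt a" using exists_dim[OF QZt_sub fI] by blast
  have fD: "finite Dom" by (simp add: vecs_finite)
  have fW: "finite (dual UNIV (*) II QXt)"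
    using vecs_finite[OF fI] dual_sub finite_subset by metis
  have "card QZt = card Dom * card (dual UNIV (*) II QXt)"
    by (rule ET.card_Q[OF fD fW dual_QXt_sub subsp_grp[OF QZt_sub]])
  moreover have "card Dom = card (UNIV::'a set) ^ (k * r)"
    using card_vecs[of "{..<k} \<times> A"] cardA by (simp add: card_cartesian_product)
  ultimately have "card (UNIV::'a set) ^ a = card (UNIV::'a set) ^ (k * r + b)"
    using has_dim_card(2)[OF a] has_dim_card(2)[OF b] by (simp add: power_add)
  moreover have "card (UNIV::'a set) \<ge> 2"
  proof -
    have "card {0::'a,1} \<le> card (UNIV::'a set)" by (intro card_mono) auto
    thus ?thesis by simp
  qed
  ultimately have "a = k * r + b" by (simp add: power_inject_exp)
  thus ?thesis unfolding css_dim_def using a b by (intro exI[of _ a] exI[of _ b]) simp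
qed

lemma idist': "y \<in> logicals UNIV (*) {..<n'} QX QZ \<Longrightarrow> di \<le> wt {..<n'} y"
  using idist by (simp add: css_dist_def)
lemma odist': "y \<in> logicals P (fmul \<gamma>) {..<n} QXo QZo \<Longrightarrow> dout \<le> wt {..<n} y"
  using odist by (simp add: css_dist_def)

lemma dist_t: "css_dist_ge UNIV (*) II QXt QZt (di * dout)"
  unfolding css_dist_ge_def
proof
  fix y assume "y \<in> logicals UNIV (*) II QXt QZt"
  hence "y \<in> QZt - dual UNIV (*) II QXt \<or> y \<in> QXt - dual UNIV (*) II QZt" by (auto simp: logicals_def)
  thus "di * dout \<le> wt II y"
  proof
    assume yl: "y \<in> QZt - dual UNIV (*) II QXt"
    then obtain s where s: "s \<in> DZ" "y \<in> concat_enc n n' EncZ EZo s" using QZt_mem by blast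
    then obtain y' where y': "y' \<in> EZo s" "y \<in> cat n n' EncZ y'" using ZC.CE_mem by blast
    have y'Q: "y' \<in> QZo" using EZo_sub[OF DZ_DX[OF s(1)]] y' by blast
    have y'v: "y' \<in> vecs P {..<n}" using ZC.Eo_vecs[OF DZ_DX[OF s(1)] y'(1)] .
    have "y' \<notin> dual P (fmul \<gamma>) {..<n} QXo"
    proof
      assume "y' \<in> dual P (fmul \<gamma>) {..<n} QXo"
      hence "s = 0" using OZ.inW[OF DZ_DX[OF s(1)] y'(1)] by blast
      thus False using yl s dual_QXt by auto
    qed
    hence "dout \<le> wt {..<n} y'" using y'Q odist' by (auto simp: logicals_def)
    moreover have "di \<le> wt {..<n'} (blk y j)" if j: "j < n" "y' j \<noteq> 0" for j
    proof -
      have yj: "y' j \<in> P" using vecsP_comp[OF y'v plt_zero] .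
      have b: "blk y j \<in> EncZ (y' j)" using y'(2) j by (auto simp: cat_def)
      have "blk y j \<in> QZ" using EZ_sub[OF yj] b by blast
      moreover have "blk y j \<notin> dual UNIV (*) {..<n'} QX" using Z.inW[OF yj b] j by blast
      ultimately show ?thesis using idist' by (auto simp: logicals_def)
    qed
    ultimately show ?thesis using wt_bound by blast
  next
    assume yl: "y \<in> QXt - dual UNIV (*) II QZt"
    then obtain m where m: "m \<in> vecs P {..<k}" "y \<in> concat_enc n n' EncX EXo m" using QXt_mem by blast
    then obtain x' where x': "x' \<in> EXo m" "y \<in> cat n n' EncX x'" using XC.CE_mem by blast
    have x'Q: "x' \<in> QXo" using EXo_sub[OF m(1)] x' by blast
    have x'v: "x' \<in> vecs P {..<n}" using XC.Eo_vecs[OF m(1) x'(1)] .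
    have m0: "m \<noteq> 0"
    proof
      assume m0: "m = 0"
      have "y \<in> dual UNIV (*) II QZt"
        unfolding dual_def
      proof (intro CollectI conjI ballI)
        show "y \<in> vecs UNIV II" using XC.CE_vecs m(2) by blast
        fix z assume "z \<in> QZt"
        then obtain s where s: "s \<in> DZ" "z \<in> concat_enc n n' EncZ EZo s" using QZt_mem by blast
        have "dotp (fmul \<gamma>) {..<k} m s = 0" using m0 by (simp add: dotp_def)
        thus "dotp (*) II y z = 0" using dot_CE[OF m(1) DZ_DX[OF s(1)] m(2) s(2)] T_zero by simp
      qed
      thus False using yl by blast
    qed
    have "x' \<notin> dual P (fmul \<gamma>) {..<n} QZo"
      using OX.inW[OF m(1) x'(1)] m0 by blast
    hence "dout \<le> wt {..<n} x'" using x'Q odist' by (auto simp: logicals_def)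
    moreover have "di \<le> wt {..<n'} (blk y j)" if j: "j < n" "x' j \<noteq> 0" for j
    proof -
      have xj: "x' j \<in> P" using vecsP_comp[OF x'v plt_zero] .
      have b: "blk y j \<in> EncX (x' j)" using x'(2) j by (auto simp: cat_def)
      have "blk y j \<in> QX" using EX_sub[OF xj] b by blast
      moreover have "blk y j \<notin> dual UNIV (*) {..<n'} QZ" using X.inW[OF xj b] j by blast
      ultimately show ?thesis using idist' by (auto simp: logicals_def)
    qed
    ultimately show ?thesis using wt_bound by blast
  qed
qed

lemma main_h:
  "is_css UNIV (*) II QXt QZt \<and> css_dim UNIV (*) II QXt QZt (r * k)
   \<and> is_enc UNIV (*) (dual UNIV (*) II QXt) QZt (smul (*)) Dom Et
   \<and> css_dist_ge UNIV (*) II QXt QZt (di * dout)"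
  using is_css_t dim_t enc_t dist_t by blast

end


definition linP :: "nat \<Rightarrow> ('a::field poly \<Rightarrow> 'a) \<Rightarrow> bool" where
  "linP m f \<longleftrightarrow> (\<forall>a\<in>polys_lt m. \<forall>b\<in>polys_lt m. f (a + b) = f a + f b) \<and>
     (\<forall>c. \<forall>a\<in>polys_lt m. f (smult c a) = c * f a)"

lemma linP_sum: "linP m f \<Longrightarrow> (\<And>i. i \<in> S \<Longrightarrow> g i \<in> polys_lt m) \<Longrightarrow> f (\<Sum>i\<in>S. g i) = (\<Sum>i\<in>S. f (g i))"
proof (induct S rule: infinite_finite_induct)
  case (infinite A) thus ?case using linP_def[of m f] by (metis plt_zero smult_0_left sum.infinite mult_zero_left)
next
  case empty thus ?case using linP_def[of m f] by (metis plt_zero smult_0_left sum.empty mult_zero_left)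
next
  case (insert x F)
  have "f (\<Sum>i\<in>insert x F. g i) = f (g x + (\<Sum>i\<in>F. g i))" using insert by simp
  also have "\<dots> = f (g x) + f (\<Sum>i\<in>F. g i)"
    using insert(4) plt_sum[of F g m] insert(5) unfolding linP_def by simp
  finally show ?case using insert by simp
qed

lemma monom_plt: "i < m \<Longrightarrow> monom c i \<in> polys_lt m"
  by (simp add: polys_lt_def degree_monom_eq) (metis degree_monom_le le_less_trans)

lemma poly_expand: "p \<in> polys_lt m \<Longrightarrow> p = (\<Sum>i<m. smult (coeff p i) (monom 1 i))"
  for p :: "'a::field poly"
proof -
  assume p: "p \<in> polys_lt m"
  have "p = msum m (\<lambda>i. coeff p i)"
  proof (rule poly_eqI)
    fix i show "coeff p i = coeff (msum m (\<lambda>i. coeff p i)) i"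
      using p by (cases "p = 0"; cases "i < m") (auto simp: coeff_msum polys_lt_def coeff_eq_0)
  qed
  thus ?thesis by (simp add: msum_def smult_monom)
qed

lemma linP_eq: assumes "linP m f" "linP m g" "\<And>i. i < m \<Longrightarrow> f (monom 1 i) = g (monom 1 i)" "p \<in> polys_lt m"
  shows "f p = g p"
proof -
  have "f p = (\<Sum>i<m. f (smult (coeff p i) (monom 1 i)))"
    by (subst poly_expand[OF assms(4)], rule linP_sum[OF assms(1)]) (auto intro: plt_smult monom_plt)
  also have "\<dots> = (\<Sum>i<m. coeff p i * f (monom 1 i))"
  proof (intro sum.cong refl)
    fix i assume "i \<in> {..<m}"
    thus "f (smult (coeff p i) (monom 1 i)) = coeff p i * f (monom 1 i)"
      using assms(1) monom_plt[of i m 1] unfolding linP_def by blast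
  qed
  also have "\<dots> = (\<Sum>i<m. coeff p i * g (monom 1 i))" using assms(3) by simp
  also have "\<dots> = (\<Sum>i<m. g (smult (coeff p i) (monom 1 i)))"
  proof (intro sum.cong refl)
    fix i assume "i \<in> {..<m}"
    hence e: "g (smult (coeff p i) (monom 1 i)) = coeff p i * g (monom 1 i)"
      using assms(2) monom_plt[of i m 1] unfolding linP_def by blast
    show "coeff p i * g (monom 1 i) = g (smult (coeff p i) (monom 1 i))" by (rule e[symmetric])
  qed
  also have "\<dots> = g p"
    by (subst (2) poly_expand[OF assms(4)], rule linP_sum[OF assms(2), symmetric]) (auto intro: plt_smult monom_plt)
  finally show ?thesis .
qed

context inner_code
begin

lemma T_diff: assumes "a \<in> P" "b \<in> P" shows "T (a - b) = T a - T b"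
proof -
  have "a - b \<in> P" using plt_diff assms by blast
  hence "T a = T (a - b) + T b" using T_add[of "a - b" b] assms by simp
  thus ?thesis by simp
qed

lemma trace_repr:
  assumes L: "linP (degree \<gamma>) L"
  shows "\<exists>\<beta>\<in>P. \<forall>p\<in>P. L p = T (fmul \<gamma> \<beta> p)"
proof -
  define Fs where "Fs = {f :: 'a poly \<Rightarrow> 'a. linP (degree \<gamma>) f \<and> (\<forall>x. x \<notin> P \<longrightarrow> f x = 0)}"
  define \<Phi> where "\<Phi> \<beta> = (\<lambda>p. if p \<in> P then T (fmul \<gamma> \<beta> p) else 0)" for \<beta>
  have linT: "linP (degree \<gamma>) (\<lambda>p. T (fmul \<gamma> \<beta> p))" for \<beta>
    unfolding linP_def
  proof (intro conjI ballI allI)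
    fix a b :: "'a poly" assume "a \<in> P" "b \<in> P"
    thus "T (fmul \<gamma> \<beta> (a + b)) = T (fmul \<gamma> \<beta> a) + T (fmul \<gamma> \<beta> b)"
      by (simp add: fmul_add_right T_add fmul_plt[OF g0])
  next
    fix c and a :: "'a poly" assume "a \<in> P"
    have "fmul \<gamma> \<beta> (smult c a) = smult c (fmul \<gamma> \<beta> a)" by (metis fmul_comm fmul_smult_left)
    thus "T (fmul \<gamma> \<beta> (smult c a)) = c * T (fmul \<gamma> \<beta> a)" by (simp add: T_smult fmul_plt[OF g0])
  qed
  have linPhi: "linP (degree \<gamma>) (\<Phi> \<beta>)" for \<beta>
    using linT[of \<beta>] unfolding linP_def \<Phi>_def by (simp add: plt_add plt_smult)
  have PhiF: "\<Phi> ` P \<subseteq> Fs" using linPhi by (auto simp: Fs_def \<Phi>_def)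
  have inj: "inj_on \<Phi> P"
  proof (rule inj_onI)
    fix b1 b2 assume b: "b1 \<in> P" "b2 \<in> P" "\<Phi> b1 = \<Phi> b2"
    have "\<forall>c\<in>P. T (fmul \<gamma> c (b1 - b2)) = 0"
    proof
      fix c :: "'a poly" assume c: "c \<in> P"
      have "T (fmul \<gamma> b1 c) = T (fmul \<gamma> b2 c)" using b(3) c unfolding \<Phi>_def by (metis (mono_tags))
      thus "T (fmul \<gamma> c (b1 - b2)) = 0"
        by (simp add: fmul_comm[of \<gamma> c] fmul_diff_left T_diff fmul_plt[OF g0])
    qed
    hence "b1 - b2 = 0" using ND plt_diff b by blast
    thus "b1 = b2" by simp
  qed
  define \<psi> where "\<psi> f = (\<lambda>i. if i < degree \<gamma> then f (monom 1 i) else 0)" for f :: "'a poly \<Rightarrow> 'a"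
  have injpsi: "inj_on \<psi> Fs"
  proof (rule inj_onI)
    fix f g assume fg: "f \<in> Fs" "g \<in> Fs" "\<psi> f = \<psi> g"
    have m: "f (monom 1 i) = g (monom 1 i)" if "i < degree \<gamma>" for i
      using fg(3) that unfolding \<psi>_def by (metis (mono_tags))
    show "f = g"
    proof
      fix x show "f x = g x"
        using linP_eq[of _ f g x, OF _ _ m] fg(1,2) by (cases "x \<in> P") (auto simp: Fs_def)
    qed
  qed
  have psiV: "\<psi> ` Fs \<subseteq> vecs UNIV {..<degree \<gamma>}" by (auto simp: \<psi>_def vecs_def)
  have fV: "finite (vecs (UNIV::'a set) {..<degree \<gamma>})" by (simp add: vecs_finite)
  have fFs: "finite Fs" using finite_imageD[OF finite_subset[OF psiV fV] injpsi] .
  have "card Fs \<le> card (vecs (UNIV::'a set) {..<degree \<gamma>})"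
    using card_image[OF injpsi] card_mono[OF fV psiV] by simp
  also have "\<dots> = card (P :: 'a poly set)"
  proof -
    have "card (vecs (UNIV::'a set) {..<degree \<gamma>}) = card (UNIV::'a set) ^ card {..<degree \<gamma>}"
      by (rule card_vecs) simp
    moreover have "card (P :: 'a poly set) = card (UNIV::'a set) ^ degree \<gamma>" by (simp add: card_plt)
    ultimately show ?thesis by simp
  qed
  also have "\<dots> = card (\<Phi> ` P)" using card_image[OF inj] by simp
  finally have "\<Phi> ` P = Fs" using card_seteq[OF fFs PhiF] by simp
  moreover have "(\<lambda>p. if p \<in> P then L p else 0) \<in> Fs"
    using L unfolding Fs_def linP_def by (simp add: plt_add plt_smult)
  ultimately have "(\<lambda>p. if p \<in> P then L p else 0) \<in> \<Phi> ` P" by simp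
  then obtain \<beta> where \<beta>: "\<beta> \<in> P" "\<Phi> \<beta> = (\<lambda>p. if p \<in> P then L p else 0)"
    by (auto simp del: \<Phi>_def)
  have "L p = T (fmul \<gamma> \<beta> p)" if "p \<in> P" for p
    using fun_cong[OF \<beta>(2), of p] that by (simp add: \<Phi>_def)
  thus ?thesis using \<beta>(1) by blast
qed

end


lemma prod4: "(\<Prod>h<(4::nat). f h) = f 0 * f 1 * f 2 * (f 3 :: 'b::comm_monoid_mult)"
proof -
  have "{..<4::nat} = {0,1,2,3}" by auto
  thus ?thesis by (simp add: mult.assoc)
qed

lemma dec_lin:
  fixes Dec :: "(nat \<Rightarrow> 'a::field) \<Rightarrow> 'a poly" and T :: "'a poly \<Rightarrow> 'a"
  assumes Dadd: "\<forall>u\<in>vecs UNIV {..<n'}. \<forall>v\<in>vecs UNIV {..<n'}. Dec (u + v) = Dec u + Dec v"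
    and Dsm: "\<forall>c. \<forall>u\<in>vecs UNIV {..<n'}. Dec (smul (*) c u) = smult c (Dec u)"
    and DP: "\<forall>u\<in>vecs UNIV {..<n'}. Dec u \<in> polys_lt m"
    and Tl: "linP m T"
    and v: "v \<in> vecs UNIV {..<n'}"
  shows "T (Dec v) = (\<Sum>i<n'. v i * T (Dec (\<lambda>x. if x = i then 1 else 0)))"
proof -
  define e where "e i = (\<lambda>x::nat. if x = i then (1::'a) else 0)" for i :: nat
  have ev: "i < n' \<Longrightarrow> e i \<in> vecs UNIV {..<n'}" for i by (auto simp: e_def vecs_def)
  have smv: "w \<in> vecs UNIV {..<n'} \<Longrightarrow> smul (*) c w \<in> vecs UNIV {..<n'}" for w :: "nat \<Rightarrow> 'a" and c
    by (auto simp: vecs_def smul_def)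
  have addv: "w \<in> vecs UNIV {..<n'} \<Longrightarrow> w' \<in> vecs UNIV {..<n'} \<Longrightarrow> w + w' \<in> vecs UNIV {..<n'}" for w w' :: "nat \<Rightarrow> 'a"
    by (auto simp: vecs_def)
  have D0: "Dec 0 = 0"
  proof -
    have "(0::nat \<Rightarrow> 'a) \<in> vecs UNIV {..<n'}" by (simp add: vecs_def)
    hence "Dec (smul (*) 0 0) = smult 0 (Dec 0)" using Dsm by blast
    thus ?thesis by (simp add: smul_def zero_fun_def)
  qed
  have Dsum: "S \<subseteq> {..<n'} \<Longrightarrow> (\<forall>i\<in>S. w i \<in> vecs UNIV {..<n'}) \<Longrightarrow>
      Dec (\<Sum>i\<in>S. w i) = (\<Sum>i\<in>S. Dec (w i)) \<and> (\<Sum>i\<in>S. w i) \<in> vecs UNIV {..<n'}"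
    for S :: "nat set" and w :: "nat \<Rightarrow> nat \<Rightarrow> 'a"
  proof (induct S rule: infinite_finite_induct)
    case (infinite A) thus ?case by (meson finite_lessThan finite_subset)
  next
    case empty
    have "(0::nat \<Rightarrow> 'a) \<in> vecs UNIV {..<n'}" by (simp add: vecs_def)
    thus ?case using D0 by (simp only: sum.empty)
  next
    case (insert x F)
    have IH: "Dec (sum w F) = (\<Sum>i\<in>F. Dec (w i)) \<and> sum w F \<in> vecs UNIV {..<n'}"
      using insert by auto
    have wx: "w x \<in> vecs UNIV {..<n'}" using insert by auto
    have s1: "sum w (insert x F) = w x + sum w F" using insert(1,2) by (rule sum.insert)
    have s2: "(\<Sum>i\<in>insert x F. Dec (w i)) = Dec (w x) + (\<Sum>i\<in>F. Dec (w i))"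
      using insert(1,2) by (rule sum.insert)
    show ?case unfolding s1 s2 using Dadd addv[OF wx] IH wx by metis
  qed
  have vs: "v = (\<Sum>i<n'. smul (*) (v i) (e i))"
  proof
    fix x
    have a: "v i * (if x = i then 1 else 0) = (if x = i then v i else 0)" for i by simp
    show "v x = (\<Sum>i<n'. smul (*) (v i) (e i)) x"
      using v by (simp add: sum_fun_app smul_def e_def vecs_def a sum.delta)
  qed
  have "Dec v = (\<Sum>i<n'. Dec (smul (*) (v i) (e i)))"
    by (subst vs, rule conjunct1[OF Dsum]) (auto intro: smv ev)
  also have "\<dots> = (\<Sum>i<n'. smult (v i) (Dec (e i)))" using Dsm ev by simp
  finally have "T (Dec v) = T (\<Sum>i<n'. smult (v i) (Dec (e i)))" by simp
  also have "\<dots> = (\<Sum>i<n'. T (smult (v i) (Dec (e i))))"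
    by (rule linP_sum[OF Tl]) (use DP ev plt_smult in blast)
  also have "\<dots> = (\<Sum>i<n'. v i * T (Dec (e i)))"
    using Tl DP ev unfolding linP_def by simp
  finally show ?thesis by (simp add: e_def)
qed

context inner_code
begin
lemma T_lin: "linP (degree \<gamma>) T" unfolding linP_def using T_add T_smult by blast
end


lemma fmul4: "fmul \<gamma> (fmul \<gamma> (fmul \<gamma> a b) c) d = (a * b * c * d) mod \<gamma>"
  unfolding fmul_def by (metis mod_mult_left_eq)

lemma plt_deg: "p \<in> polys_lt r \<Longrightarrow> degree p \<le> r - 1"
  by (auto simp: polys_lt_def)

lemma ccz_main:
  fixes \<gamma> :: "'a::{finite,field} poly" and n' n k r :: nat and A :: "'a set"
    and QXi QZi :: "nat \<Rightarrow> (nat \<Rightarrow> 'a) set" and EZi EXi :: "nat \<Rightarrow> 'a poly \<Rightarrow> (nat \<Rightarrow> 'a) set"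
    and QXo QZo :: "nat \<Rightarrow> (nat \<Rightarrow> 'a poly) set"
    and EZo EXo :: "nat \<Rightarrow> (nat \<Rightarrow> 'a poly) \<Rightarrow> (nat \<Rightarrow> 'a poly) set" and di dout :: "nat \<Rightarrow> nat"
  assumes C: "\<And>h. h < 3 \<Longrightarrow> conc \<gamma> n' (QXi h) (QZi h) (EZi h) (EXi h) n k r A (QXo h) (QZo h) (EZo h) (EXo h) (di h) (dout h)"
    and E3: "is_enc UNIV (*) (dual UNIV (*) {..<n'} (QXi 3)) (QZi 3) smult (polys_lt (degree \<gamma>)) (EZi 3)"
    and mf: "mult_friendly 4 \<gamma> n' EZi"
    and occz: "transversal_ccz (polys_lt (degree \<gamma>)) (fmul \<gamma>) {..<n} {..<k} (EZo 0) (EZo 1) (EZo 2)"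
    and rb: "3 * (r - 1) < degree \<gamma>"
  shows "transversal_ccz UNIV (*) ({..<n} \<times> {..<n'}) ({..<k} \<times> A)
        (\<lambda>z. space_of (ev_inv k r A z) (concat_enc n n' (EZi 0) (EZo 0)))
        (\<lambda>z. space_of (ev_inv k r A z) (concat_enc n n' (EZi 1) (EZo 1)))
        (\<lambda>z. space_of (ev_inv k r A z) (concat_enc n n' (EZi 2) (EZo 2)))"
proof -
  interpret C0: conc \<gamma> n' "QXi 0" "QZi 0" "EZi 0" "EXi 0" n k r A "QXo 0" "QZo 0" "EZo 0" "EXo 0" "di 0" "dout 0"
    using C[of 0] by simp
  interpret C1: conc \<gamma> n' "QXi 1" "QZi 1" "EZi 1" "EXi 1" n k r A "QXo 1" "QZo 1" "EZo 1" "EXo 1" "di 1" "dout 1"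
    using C[of 1] by simp
  interpret C2: conc \<gamma> n' "QXi 2" "QZi 2" "EZi 2" "EXi 2" n k r A "QXo 2" "QZo 2" "EZo 2" "EXo 2" "di 2" "dout 2"
    using C[of 2] by simp
  let ?P = "polys_lt (degree \<gamma>) :: 'a poly set"
  let ?T = "ftrace \<gamma>"
  have ne3: "\<exists>w. w \<in> EZi 3 x" if xP: "x \<in> ?P" for x
  proof -
    obtain v where "EZi 3 x = (\<lambda>w. v + w) ` dual UNIV (*) {..<n'} (QXi 3)"
      using E3 xP unfolding is_enc_def by blast
    thus ?thesis using grp_zero[OF dual_grp_times] by blast
  qed
  obtain Dec :: "(nat \<Rightarrow> 'a) \<Rightarrow> 'a poly" where
    DP: "\<forall>u\<in>vecs UNIV {..<n'}. Dec u \<in> ?P" and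
    Dadd: "\<forall>u\<in>vecs UNIV {..<n'}. \<forall>v\<in>vecs UNIV {..<n'}. Dec (u + v) = Dec u + Dec v" and
    Dsm: "\<forall>c. \<forall>u\<in>vecs UNIV {..<n'}. Dec (smul (*) c u) = smult c (Dec u)" and
    Dprod: "\<And>z u. (\<forall>h<4. z h \<in> ?P \<and> u h \<in> EZi h (z h)) \<Longrightarrow> (\<Prod>h<4. z h) mod \<gamma> = Dec (\<Prod>h<4. u h)"
    using mf unfolding mult_friendly_def by blast
  define L where "L p = (\<Sum>a\<in>A. poly p a)" for p
  have Llin: "linP (degree \<gamma>) L"
    unfolding linP_def L_def by (simp add: sum.distrib sum_distrib_left)
  obtain \<beta> where \<beta>: "\<beta> \<in> ?P" "\<And>p. p \<in> ?P \<Longrightarrow> L p = ?T (fmul \<gamma> \<beta> p)"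
    using C0.trace_repr[OF Llin] by blast
  obtain bo where bo: "bo \<in> vecs ?P {..<n}" and
    boc: "\<And>z1 z2 z3 u1 u2 u3. z1 \<in> vecs ?P {..<k} \<Longrightarrow> z2 \<in> vecs ?P {..<k} \<Longrightarrow> z3 \<in> vecs ?P {..<k} \<Longrightarrow>
      u1 \<in> EZo 0 z1 \<Longrightarrow> u2 \<in> EZo 1 z2 \<Longrightarrow> u3 \<in> EZo 2 z3 \<Longrightarrow>
      (\<Sum>j<k. fmul \<gamma> (fmul \<gamma> (z1 j) (z2 j)) (z3 j)) = (\<Sum>i<n. fmul \<gamma> (fmul \<gamma> (fmul \<gamma> (bo i) (u1 i)) (u2 i)) (u3 i))"
    using occz unfolding transversal_ccz_def by blast
  define wv where "wv i = (SOME w. w \<in> EZi 3 (fmul \<gamma> \<beta> (bo i)))" for i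
  have wv: "wv i \<in> EZi 3 (fmul \<gamma> \<beta> (bo i))" for i
    unfolding wv_def using ne3[OF fmul_plt[OF C0.g0]] by (rule someI_ex)
  define c where "c l = ?T (Dec (\<lambda>x. if x = l then 1 else 0))" for l
  define b where "b = (\<lambda>(i, l). if i < n \<and> l < n' then c l * wv i l else (0::'a))"
  have bv: "b \<in> vecs UNIV ({..<n} \<times> {..<n'})" by (auto simp: b_def vecs_def)
  show ?thesis unfolding transversal_ccz_def
  proof (rule bexI[OF _ bv], intro ballI)
    fix z1 z2 z3 u1 u2 u3
    assume z: "z1 \<in> vecs UNIV ({..<k} \<times> A)" "z2 \<in> vecs UNIV ({..<k} \<times> A)" "z3 \<in> vecs UNIV ({..<k} \<times> A)"
      and u: "u1 \<in> space_of (ev_inv k r A z1) (concat_enc n n' (EZi 0) (EZo 0))"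
        "u2 \<in> space_of (ev_inv k r A z2) (concat_enc n n' (EZi 1) (EZo 1))"
        "u3 \<in> space_of (ev_inv k r A z3) (concat_enc n n' (EZi 2) (EZo 2))"
    obtain s1 where s1: "s1 \<in> ev_inv k r A z1" "u1 \<in> concat_enc n n' (EZi 0) (EZo 0) s1"
      using u(1) unfolding space_of_def by blast
    obtain s2 where s2: "s2 \<in> ev_inv k r A z2" "u2 \<in> concat_enc n n' (EZi 1) (EZo 1) s2"
      using u(2) unfolding space_of_def by blast
    obtain s3 where s3: "s3 \<in> ev_inv k r A z3" "u3 \<in> concat_enc n n' (EZi 2) (EZo 2) s3"
      using u(3) unfolding space_of_def by blast
    have sP: "s1 \<in> vecs ?P {..<k}" "s2 \<in> vecs ?P {..<k}" "s3 \<in> vecs ?P {..<k}"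
      using C0.DZ_DX[OF ev_inv_DZ[OF s1(1)]] C0.DZ_DX[OF ev_inv_DZ[OF s2(1)]] C0.DZ_DX[OF ev_inv_DZ[OF s3(1)]]
      by auto
    obtain y1 where y1: "y1 \<in> EZo 0 s1" "u1 \<in> cat n n' (EZi 0) y1" using s1(2) C0.ZC.CE_mem by blast
    obtain y2 where y2: "y2 \<in> EZo 1 s2" "u2 \<in> cat n n' (EZi 1) y2" using s2(2) C1.ZC.CE_mem by blast
    obtain y3 where y3: "y3 \<in> EZo 2 s3" "u3 \<in> cat n n' (EZi 2) y3" using s3(2) C2.ZC.CE_mem by blast
    have yv: "y1 \<in> vecs ?P {..<n}" "y2 \<in> vecs ?P {..<n}" "y3 \<in> vecs ?P {..<n}"
      using C0.ZC.Eo_vecs[OF sP(1) y1(1)] C1.ZC.Eo_vecs[OF sP(2) y2(1)] C2.ZC.Eo_vecs[OF sP(3) y3(1)] by auto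
    define p where "p j = s1 j * s2 j * s3 j" for j
    have pP: "p j \<in> ?P" for j
    proof -
      have sr: "s1 j \<in> polys_lt r" "s2 j \<in> polys_lt r" "s3 j \<in> polys_lt r"
        using vecsP_comp[OF ev_inv_DZ[OF s1(1)] plt_zero] vecsP_comp[OF ev_inv_DZ[OF s2(1)] plt_zero]
          vecsP_comp[OF ev_inv_DZ[OF s3(1)] plt_zero] by auto
      have "degree (p j) \<le> degree (s1 j) + degree (s2 j) + degree (s3 j)"
        unfolding p_def by (meson add_le_mono degree_mult_le order_trans order_refl)
      also have "\<dots> \<le> 3 * (r - 1)" using plt_deg[OF sr(1)] plt_deg[OF sr(2)] plt_deg[OF sr(3)] by simp
      finally have "degree (p j) < degree \<gamma>" using rb by simp
      thus ?thesis by (simp add: polys_lt_def)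
    qed
    have pf: "p j = fmul \<gamma> (fmul \<gamma> (s1 j) (s2 j)) (s3 j)" for j
      using plt_mod[OF pP[of j]] by (simp add: fmul_mod3 p_def)
    have zj: "z1 (j, a) * z2 (j, a) * z3 (j, a) = poly (p j) a" if "j < k" "a \<in> A" for j a
      using s1(1) s2(1) s3(1) that by (simp add: ev_inv_def p_def)
    have "(\<Sum>x\<in>{..<k} \<times> A. z1 x * z2 x * z3 x) = (\<Sum>j<k. \<Sum>a\<in>A. z1 (j, a) * z2 (j, a) * z3 (j, a))"
      by (simp add: sum.cartesian_product)
    also have "\<dots> = (\<Sum>j<k. L (p j))" unfolding L_def using zj by simp
    also have "\<dots> = (\<Sum>j<k. ?T (fmul \<gamma> \<beta> (p j)))" using \<beta>(2) pP by simp
    also have "\<dots> = ?T (\<Sum>j<k. fmul \<gamma> \<beta> (p j))"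
      using C0.T_sum[of "{..<k}" "\<lambda>j. fmul \<gamma> \<beta> (p j)"] fmul_plt[OF C0.g0] by simp
    also have "(\<Sum>j<k. fmul \<gamma> \<beta> (p j)) = fmul \<gamma> \<beta> (\<Sum>j<k. p j)" by (simp add: fmul_sum_right)
    also have "(\<Sum>j<k. p j) = (\<Sum>i<n. fmul \<gamma> (fmul \<gamma> (fmul \<gamma> (bo i) (y1 i)) (y2 i)) (y3 i))"
      unfolding pf using boc[OF sP y1(1) y2(1) y3(1)] .
    also have "fmul \<gamma> \<beta> \<dots> = (\<Sum>i<n. fmul \<gamma> \<beta> (fmul \<gamma> (fmul \<gamma> (fmul \<gamma> (bo i) (y1 i)) (y2 i)) (y3 i)))"
      by (simp add: fmul_sum_right)
    also have "?T \<dots> = (\<Sum>i<n. ?T (fmul \<gamma> \<beta> (fmul \<gamma> (fmul \<gamma> (fmul \<gamma> (bo i) (y1 i)) (y2 i)) (y3 i))))"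
      using C0.T_sum[of "{..<n}"] fmul_plt[OF C0.g0] by simp
    also have "\<dots> = (\<Sum>i<n. \<Sum>l<n'. b (i, l) * u1 (i, l) * u2 (i, l) * u3 (i, l))"
    proof (rule sum.cong[OF refl])
      fix i assume i: "i \<in> {..<n}"
      define zz where "zz h = (if h = 0 then y1 i else if h = 1 then y2 i else if h = 2 then y3 i else fmul \<gamma> \<beta> (bo i))" for h :: nat
      define uu where "uu h = (if h = 0 then blk u1 i else if h = 1 then blk u2 i else if h = 2 then blk u3 i else wv i)" for h :: nat
      have yiP: "y1 i \<in> ?P" "y2 i \<in> ?P" "y3 i \<in> ?P" using vecsP_comp[OF yv(1) plt_zero] vecsP_comp[OF yv(2) plt_zero]
        vecsP_comp[OF yv(3) plt_zero] by auto
      have bl: "blk u1 i \<in> EZi 0 (y1 i)" "blk u2 i \<in> EZi 1 (y2 i)" "blk u3 i \<in> EZi 2 (y3 i)"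
        using y1(2) y2(2) y3(2) i by (auto simp: cat_def)
      have "\<forall>h<4. zz h \<in> ?P \<and> uu h \<in> EZi h (zz h)"
      proof (intro allI impI)
        fix h :: nat assume "h < 4"
        hence "h = 0 \<or> h = 1 \<or> h = 2 \<or> h = 3" by auto
        thus "zz h \<in> ?P \<and> uu h \<in> EZi h (zz h)"
          using yiP bl wv[of i] fmul_plt[OF C0.g0] by (auto simp: zz_def uu_def)
      qed
      hence dz: "(\<Prod>h<4. zz h) mod \<gamma> = Dec (\<Prod>h<4. uu h)" by (rule Dprod)
      have e1: "fmul \<gamma> \<beta> (fmul \<gamma> (fmul \<gamma> (fmul \<gamma> (bo i) (y1 i)) (y2 i)) (y3 i))
          = (\<beta> * (bo i * y1 i * y2 i * y3 i)) mod \<gamma>"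
        unfolding fmul4 by (simp add: fmul_def mod_mult_right_eq)
      have e2: "(\<Prod>h<4. zz h) = y1 i * y2 i * y3 i * ((\<beta> * bo i) mod \<gamma>)"
        unfolding prod4 by (simp add: zz_def fmul_def)
      have e3: "(y1 i * y2 i * y3 i * ((\<beta> * bo i) mod \<gamma>)) mod \<gamma> = (y1 i * y2 i * y3 i * (\<beta> * bo i)) mod \<gamma>"
        by (rule mod_mult_right_eq)
      have e4: "\<beta> * (bo i * y1 i * y2 i * y3 i) = y1 i * y2 i * y3 i * (\<beta> * bo i)" by (simp add: mult_ac)
      have lhs: "fmul \<gamma> \<beta> (fmul \<gamma> (fmul \<gamma> (fmul \<gamma> (bo i) (y1 i)) (y2 i)) (y3 i)) = (\<Prod>h<4. zz h) mod \<gamma>"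
        unfolding e1 e2 e3 e4 ..
      have U: "(\<Prod>h<4. uu h) = blk u1 i * blk u2 i * blk u3 i * wv i" unfolding prod4 by (simp add: uu_def)
      have Uv: "(\<Prod>h<4. uu h) \<in> vecs UNIV {..<n'}"
        using C0.EZ_vecs[OF yiP(1) bl(1)] unfolding U by (auto simp: vecs_def)
      have "?T (fmul \<gamma> \<beta> (fmul \<gamma> (fmul \<gamma> (fmul \<gamma> (bo i) (y1 i)) (y2 i)) (y3 i))) = ?T (Dec (\<Prod>h<4. uu h))"
        using lhs dz by simp
      also have "\<dots> = (\<Sum>l<n'. (\<Prod>h<4. uu h) l * c l)"
        unfolding c_def by (rule dec_lin[OF Dadd Dsm DP C0.T_lin Uv])
      also have "\<dots> = (\<Sum>l<n'. b (i, l) * u1 (i, l) * u2 (i, l) * u3 (i, l))"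
        using i unfolding U by (intro sum.cong refl) (simp add: b_def blk_def mult_ac)
      finally show "?T (fmul \<gamma> \<beta> (fmul \<gamma> (fmul \<gamma> (fmul \<gamma> (bo i) (y1 i)) (y2 i)) (y3 i))) =
          (\<Sum>l<n'. b (i, l) * u1 (i, l) * u2 (i, l) * u3 (i, l))" .
    qed
    also have "\<dots> = (\<Sum>x\<in>{..<n} \<times> {..<n'}. b x * u1 x * u2 x * u3 x)"
      by (simp add: sum.cartesian_product)
    finally show "(\<Sum>j\<in>{..<k} \<times> A. z1 j * z2 j * z3 j) = (\<Sum>i\<in>{..<n} \<times> {..<n'}. b i * u1 i * u2 i * u3 i)" .
  qed
qed


theorem proposition5p1:
  fixes n' k' n k r :: nat
    and A :: "'a::{finite,field} set"
    and \<gamma> :: "'a poly"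
    and QXi QZi :: "nat \<Rightarrow> (nat \<Rightarrow> 'a) set"
    and EZi EXi :: "nat \<Rightarrow> 'a poly \<Rightarrow> (nat \<Rightarrow> 'a) set"
    and di :: "nat \<Rightarrow> nat"
    and QXo QZo :: "nat \<Rightarrow> (nat \<Rightarrow> 'a poly) set"
    and EZo EXo :: "nat \<Rightarrow> (nat \<Rightarrow> 'a poly) \<Rightarrow> (nat \<Rightarrow> 'a poly) set"
    and dout :: "nat \<Rightarrow> nat"
  assumes gamma_irr: "irreducible \<gamma>" and gamma_deg: "degree \<gamma> = k'"
    and inner: "\<forall>h<4. is_css UNIV (*) {..<n'} (QXi h) (QZi h)
        \<and> css_dim UNIV (*) {..<n'} (QXi h) (QZi h) k'
        \<and> css_dist UNIV (*) {..<n'} (QXi h) (QZi h) (di h)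
        \<and> is_enc UNIV (*) (dual UNIV (*) {..<n'} (QXi h)) (QZi h) smult (polys_lt k') (EZi h)"
    and mf: "mult_friendly 4 \<gamma> n' EZi"
    and outer: "\<forall>h<3. is_css (polys_lt k') (fmul \<gamma>) {..<n} (QXo h) (QZo h)
        \<and> css_dim (polys_lt k') (fmul \<gamma>) {..<n} (QXo h) (QZo h) k
        \<and> css_dist (polys_lt k') (fmul \<gamma>) {..<n} (QXo h) (QZo h) (dout h)
        \<and> is_enc (polys_lt k') (fmul \<gamma>) (dual (polys_lt k') (fmul \<gamma>) {..<n} (QXo h)) (QZo h)
             (smul (fmul \<gamma>)) (vecs (polys_lt k') {..<k}) (EZo h)"
    and outer_ccz: "transversal_ccz (polys_lt k') (fmul \<gamma>) {..<n} {..<k} (EZo 0) (EZo 1) (EZo 2)"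
    and r_bound: "3 * (r - 1) < k'" and r_le_q: "r \<le> card (UNIV :: 'a set)" and A_card: "card A = r"
    and innerX: "\<forall>h<4. is_enc UNIV (*) (dual UNIV (*) {..<n'} (QZi h)) (QXi h) smult (polys_lt k') (EXi h)
        \<and> compatible (\<lambda>x z. ftrace \<gamma> (fmul \<gamma> x z)) (*) {..<n'} (polys_lt k') (EXi h) (EZi h)"
    and outerX: "\<forall>h<3. is_enc (polys_lt k') (fmul \<gamma>) (dual (polys_lt k') (fmul \<gamma>) {..<n} (QZo h)) (QXo h)
             (smul (fmul \<gamma>)) (vecs (polys_lt k') {..<k}) (EXo h)
        \<and> compatible (dotp (fmul \<gamma>) {..<k}) (fmul \<gamma>) {..<n} (vecs (polys_lt k') {..<k}) (EXo h) (EZo h)"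
  shows "(\<forall>h<3.
      let QXt = space_of (vecs (polys_lt k') {..<k}) (concat_enc n n' (EXi h) (EXo h));
          QZt = space_of (vecs (polys_lt r) {..<k}) (concat_enc n n' (EZi h) (EZo h));
          Et = (\<lambda>z. space_of (ev_inv k r A z) (concat_enc n n' (EZi h) (EZo h)));
          I = {..<n} \<times> {..<n'}
      in is_css UNIV (*) I QXt QZt
         \<and> css_dim UNIV (*) I QXt QZt (r * k)
         \<and> is_enc UNIV (*) (dual UNIV (*) I QXt) QZt (smul (*)) (vecs UNIV ({..<k} \<times> A)) Et
         \<and> css_dist_ge UNIV (*) I QXt QZt (di h * dout h))
    \<and> transversal_ccz UNIV (*) ({..<n} \<times> {..<n'}) ({..<k} \<times> A)
        (\<lambda>z. space_of (ev_inv k r A z) (concat_enc n n' (EZi 0) (EZo 0)))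
        (\<lambda>z. space_of (ev_inv k r A z) (concat_enc n n' (EZi 1) (EZo 1)))
        (\<lambda>z. space_of (ev_inv k r A z) (concat_enc n n' (EZi 2) (EZo 2)))"
proof -
  have g0: "\<gamma> \<noteq> 0" using gamma_irr by auto
  have kpos: "degree \<gamma> > 0"
    using gamma_irr irreducible_not_unit is_unit_iff_degree[OF g0] by auto
  have r_le: "r \<le> degree \<gamma>" using r_bound gamma_deg by linarith
  have IC: "inner_code \<gamma> n' (QXi h) (QZi h) (EZi h) (EXi h)" if "h < 4" for h
    unfolding inner_code_def using inner innerX that g0 kpos gamma_deg by auto
  have CC: "conc \<gamma> n' (QXi h) (QZi h) (EZi h) (EXi h) n k r A (QXo h) (QZo h) (EZo h) (EXo h) (di h) (dout h)"
    if h: "h < 3" for h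
    unfolding conc_def conc_axioms_def
    using IC[of h] h inner outer outerX r_le A_card gamma_deg by auto
  have part1: "\<forall>h<3.
      let QXt = space_of (vecs (polys_lt k') {..<k}) (concat_enc n n' (EXi h) (EXo h));
          QZt = space_of (vecs (polys_lt r) {..<k}) (concat_enc n n' (EZi h) (EZo h));
          Et = (\<lambda>z. space_of (ev_inv k r A z) (concat_enc n n' (EZi h) (EZo h)));
          I = {..<n} \<times> {..<n'}
      in is_css UNIV (*) I QXt QZt
         \<and> css_dim UNIV (*) I QXt QZt (r * k)
         \<and> is_enc UNIV (*) (dual UNIV (*) I QXt) QZt (smul (*)) (vecs UNIV ({..<k} \<times> A)) Et
         \<and> css_dist_ge UNIV (*) I QXt QZt (di h * dout h)"
  proof (intro allI impI)
    fix h :: nat assume h: "h < 3"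
    interpret CH: conc \<gamma> n' "QXi h" "QZi h" "EZi h" "EXi h" n k r A "QXo h" "QZo h" "EZo h" "EXo h" "di h" "dout h"
      using CC[OF h] .
    show "let QXt = space_of (vecs (polys_lt k') {..<k}) (concat_enc n n' (EXi h) (EXo h));
          QZt = space_of (vecs (polys_lt r) {..<k}) (concat_enc n n' (EZi h) (EZo h));
          Et = (\<lambda>z. space_of (ev_inv k r A z) (concat_enc n n' (EZi h) (EZo h)));
          I = {..<n} \<times> {..<n'}
      in is_css UNIV (*) I QXt QZt
         \<and> css_dim UNIV (*) I QXt QZt (r * k)
         \<and> is_enc UNIV (*) (dual UNIV (*) I QXt) QZt (smul (*)) (vecs UNIV ({..<k} \<times> A)) Et
         \<and> css_dist_ge UNIV (*) I QXt QZt (di h * dout h)"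
      unfolding Let_def using CH.main_h gamma_deg by simp
  qed
  have E3: "is_enc UNIV (*) (dual UNIV (*) {..<n'} (QXi 3)) (QZi 3) smult (polys_lt (degree \<gamma>)) (EZi 3)"
    using inner gamma_deg by auto
  have part2: "transversal_ccz UNIV (*) ({..<n} \<times> {..<n'}) ({..<k} \<times> A)
        (\<lambda>z. space_of (ev_inv k r A z) (concat_enc n n' (EZi 0) (EZo 0)))
        (\<lambda>z. space_of (ev_inv k r A z) (concat_enc n n' (EZi 1) (EZo 1)))
        (\<lambda>z. space_of (ev_inv k r A z) (concat_enc n n' (EZi 2) (EZo 2)))"
    by (rule ccz_main[OF CC E3 mf]) (use outer_ccz r_bound gamma_deg in auto)
  show ?thesis using part1 part2 by blast
qed


end
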